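(* Assume the MDP satisfies the low-rank assumption with parameter $d$. In the infinite-sample setting, run the evaluation algorithm with weight matrices $\rho_t = d_t^{\pi^\beta}$ for $t\in[H]$ and with the infinite-sample matrix estimation subroutine. Then the output $\widehat J$ satisfies \[ \big|\widehat J - J^{\pi^\theta}\big| \le 2H\sqrt{dSA}\,\sum_{t=1}^{H}\operatorname{Dis}\big(d_t^{\pi^\beta}, d_t^{\pi^\theta}\big). \]
   Context: MDP: finite state space $\mathcal S$ with $S=|\mathcal S|$, finite action space $\mathcal A$ with $A=|\mathcal A|$, horizon $H$, transition kernels $P_t(\cdot\mid s,a)\in\Delta(\mathcal S)$, rewards $r_t:\mathcal S\times\mathcal A\to[0,1]$ for $t\in[H]$, initial state distribution $\mu_1$. A policy is $\pi=\{\pi_t:\mathcal S\to\Delta(\mathcal A)\}_{t\in[H]}$; under $\pi$, $s_1\sim\mu_1$, $a_t\sim\pi_t(\cdot\mid s_t)$, $s_{t+1}\sim P_t(\cdot\mid s_t,a_t)$. Let $d_t^\pi(s,a)=\Pr_\pi(s_t=s,a_t=a)$ and $J^\pi=\mathbb E_\pi[\sum_{t=1}^H r_t(s_t,a_t)]$. Functions on $\mathcal S\times\mathcal A$ (including distributions on $\mathcal S\times\mathcal A$) are viewed as real $S\times A$ matrices. $\pi^\theta$ is the target policy, $\pi^\beta$ the behavior policy. Low-rank assumption with parameter $d$: with $d'=\lfloor d/2\rfloor$, for every $t$, $r_t$ has rank at most $d'$, and there are real functions $u_{t,i},w_{t,i}$ such that either $P_t(s'\mid s,a)=\sum_{i=1}^{d'}u_{t,i}(s',s)w_{t,i}(a)$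 for all $s',s,a$, or $P_t(s'\mid s,a)=\sum_{i=1}^{d'}u_{t,i}(s)w_{t,i}(s',a)$ for all $s',s,a$. Notation: $\|\cdot\|_{\mathrm{op}}$ is the largest singular value, $\|M\|_\infty=\max_{i,j}|M_{ij}|$, $\|M\|_{\max}=\min_{U,V:\,M=UV^\top}\|U\|_{2\to\infty}\|V\|_{2\to\infty}$ where $\|\cdot\|_{2\to\infty}$ is the maximum row Euclidean norm; $\mathbb 1_M$ is the $0/1$ matrix indicating $\operatorname{supp}(M)=\{(i,j):M_{ij}\neq0\}$; $\circ$ is the entrywise product. Operator discrepancy: for $p,q\in\Delta(\mathcal S\times\mathcal A)$, $\operatorname{Dis}(p,q)=\min\{\|g-q\|_{\mathrm{op}}: g\in\Delta(\mathcal S\times\mathcal A),\ \operatorname{supp}(g)\subseteq\operatorname{supp}(p)\}$. Evaluation algorithm (inputs: target policy $\pi^\theta$, $\mu_1$, weight matrices $\rho_t$, estimated transitions $\widehat P_t$, subroutine $\mathrm{ME}$): set $\widehat Q_{H+1}=0$; for $t=H,H-1,\dots,1$: set $Z_t(s,a)=r_t(s,a)+\sum_{s',a'}\widehat P_t(s'\mid s,a)\pi^\theta_{t+1}(a'\mid s')\widehat Q_{t+1}(s',a')$ for $(s,a)\in\operatorname{supp}(\rho_t)$, then $\widehat Q_t=\mathrm{ME}(\rho_t,Z_t)$. Output $\widehat J=\sum_{s,a}\mu_1(s)\pi_1^\theta(a\mid s)\widehat Q_1(s,a)$. (For $t=H$ the sum vanishes since $\widehat Q_{H+1}=0$.) Define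 also $Y_t(s,a)=r_t(s,a)+\sum_{s',a'}P_t(s'\mid s,a)\pi^\theta_{t+1}(a'\mid s')\widehat Q_{t+1}(s',a')$ for all $(s,a)$. Infinite-sample setting: $\widehat P_t(\cdot\mid s,a)=P_t(\cdot\mid s,a)$ for all $(s,a)\in\operatorname{supp}(d_t^{\pi^\beta})$ (so $Z_t=Y_t$ on $\operatorname{supp}(\rho_t)$ when $\rho_t=d_t^{\pi^\beta}$), and the infinite-sample subroutine $\mathrm{ME}(\rho_t,Y_t)$ returns a minimizer of $\|M\|_{\max}$ over $M\in\mathbb R^{S\times A}$ subject to $\mathbb 1_{\rho_t}\circ M=\mathbb 1_{\rho_t}\circ Y_t$ and $\|M\|_\infty\le H-t+1$. *)

theory Defs
  imports "HOL-Analysis.Analysis"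
begin

definition mat_of :: "('s::finite \<Rightarrow> 'a::finite \<Rightarrow> real) \<Rightarrow> real^'a^'s" where
  "mat_of M = (\<chi> s. \<chi> a. M s a)"

text \<open>Largest singular value = Euclidean operator norm.\<close>
definition opnorm :: "('s::finite \<Rightarrow> 'a::finite \<Rightarrow> real) \<Rightarrow> real" where
  "opnorm M = onorm (\<lambda>x. mat_of M *v x)"

definition entrymax :: "('s::finite \<Rightarrow> 'a::finite \<Rightarrow> real) \<Rightarrow> real" where
  "entrymax M = Max {\<bar>M s a\<bar> | s a. True}"

definition two_inf :: "nat \<Rightarrow> ('r::finite \<Rightarrow> nat \<Rightarrow> real) \<Rightarrow> real" where
  "two_inf k U = Max (range (\<lambda>x. sqrt (\<Sum>i<k. (U x i)^2)))"

definition maxnorm :: "('s::finite \<Rightarrow> 'a::finite \<Rightarrow> real) \<Rightarrow> real" where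
  "maxnorm M = Inf {two_inf k U * two_inf k V | k U V.
      \<forall>s a. M s a = (\<Sum>i<k. U s i * V a i)}"

definition supp :: "('s \<Rightarrow> 'a \<Rightarrow> real) \<Rightarrow> ('s \<times> 'a) set" where
  "supp M = {(s, a). M s a \<noteq> 0}"

definition is_dist :: "('s::finite \<Rightarrow> 'a::finite \<Rightarrow> real) \<Rightarrow> bool" where
  "is_dist g \<longleftrightarrow> (\<forall>s a. g s a \<ge> 0) \<and> (\<Sum>s\<in>UNIV. \<Sum>a\<in>UNIV. g s a) = 1"

definition Dis :: "('s::finite \<Rightarrow> 'a::finite \<Rightarrow> real) \<Rightarrow> ('s \<Rightarrow> 'a \<Rightarrow> real) \<Rightarrow> real" where
  "Dis p q = Inf {opnorm (\<lambda>s a. g s a - q s a) | g. is_dist g \<and> supp g \<subseteq> supp p}"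

definition is_policy :: "nat \<Rightarrow> (nat \<Rightarrow> 's::finite \<Rightarrow> 'a::finite \<Rightarrow> real) \<Rightarrow> bool" where
  "is_policy H \<pi> \<longleftrightarrow> (\<forall>t\<in>{1..H}. \<forall>s. (\<forall>a. \<pi> t s a \<ge> 0) \<and> (\<Sum>a\<in>UNIV. \<pi> t s a) = 1)"

definition is_transition :: "nat \<Rightarrow> (nat \<Rightarrow> 's::finite \<Rightarrow> 'a::finite \<Rightarrow> 's \<Rightarrow> real) \<Rightarrow> bool" where
  "is_transition H P \<longleftrightarrow> (\<forall>t\<in>{1..H}. \<forall>s a. (\<forall>s'. P t s a s' \<ge> 0) \<and> (\<Sum>s'\<in>UNIV. P t s a s') = 1)"

text \<open>Occupancy measure d_t^\<pi>(s,a) = Pr(s_t = s, a_t = a), for t \<ge> 1.\<close>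
fun occ :: "('s::finite \<Rightarrow> real) \<Rightarrow> (nat \<Rightarrow> 's \<Rightarrow> 'a::finite \<Rightarrow> 's \<Rightarrow> real)
            \<Rightarrow> (nat \<Rightarrow> 's \<Rightarrow> 'a \<Rightarrow> real) \<Rightarrow> nat \<Rightarrow> 's \<Rightarrow> 'a \<Rightarrow> real" where
  "occ \<mu> P \<pi> 0 s a = 0"
| "occ \<mu> P \<pi> (Suc 0) s a = \<mu> s * \<pi> 1 s a"
| "occ \<mu> P \<pi> (Suc (Suc t)) s' a' =
     (\<Sum>s\<in>UNIV. \<Sum>a\<in>UNIV. occ \<mu> P \<pi> (Suc t) s a * P (Suc t) s a s') * \<pi> (Suc (Suc t)) s' a'"

definition Jval :: "nat \<Rightarrow> ('s::finite \<Rightarrow> real) \<Rightarrow> (nat \<Rightarrow> 's \<Rightarrow> 'a::finite \<Rightarrow> 's \<Rightarrow> real)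
            \<Rightarrow> (nat \<Rightarrow> 's \<Rightarrow> 'a \<Rightarrow> real) \<Rightarrow> (nat \<Rightarrow> 's \<Rightarrow> 'a \<Rightarrow> real) \<Rightarrow> real" where
  "Jval H \<mu> P r \<pi> = (\<Sum>t=1..H. \<Sum>s\<in>UNIV. \<Sum>a\<in>UNIV. occ \<mu> P \<pi> t s a * r t s a)"

definition low_rank :: "nat \<Rightarrow> nat \<Rightarrow> (nat \<Rightarrow> 's::finite \<Rightarrow> 'a::finite \<Rightarrow> 's \<Rightarrow> real)
            \<Rightarrow> (nat \<Rightarrow> 's \<Rightarrow> 'a \<Rightarrow> real) \<Rightarrow> bool" where
  "low_rank d H P r \<longleftrightarrow> (\<forall>t\<in>{1..H}.
      rank (mat_of (r t)) \<le> d div 2 \<and>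
      ((\<exists>u w. \<forall>s' s a. P t s a s' = (\<Sum>i=1..d div 2. u i s' s * w i a)) \<or>
       (\<exists>u w. \<forall>s' s a. P t s a s' = (\<Sum>i=1..d div 2. u i s * w i s' a))))"

definition ME_feasible :: "('s::finite \<Rightarrow> 'a::finite \<Rightarrow> real) \<Rightarrow> ('s \<Rightarrow> 'a \<Rightarrow> real) \<Rightarrow> real
            \<Rightarrow> ('s \<Rightarrow> 'a \<Rightarrow> real) \<Rightarrow> bool" where
  "ME_feasible \<rho> Y c M \<longleftrightarrow> (\<forall>(s,a)\<in>supp \<rho>. M s a = Y s a) \<and> entrymax M \<le> c"

definition ME_inf :: "('s::finite \<Rightarrow> 'a::finite \<Rightarrow> real) \<Rightarrow> ('s \<Rightarrow> 'a \<Rightarrow> real) \<Rightarrow> real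
            \<Rightarrow> ('s \<Rightarrow> 'a \<Rightarrow> real) \<Rightarrow> bool" where
  "ME_inf \<rho> Y c M \<longleftrightarrow> ME_feasible \<rho> Y c M \<and>
      (\<forall>M'. ME_feasible \<rho> Y c M' \<longrightarrow> maxnorm M \<le> maxnorm M')"

end

theory Submission
  imports Defs "Jordan_Normal_Form.Determinant"
begin


definition app :: "nat \<Rightarrow> (nat \<Rightarrow> nat \<Rightarrow> real) \<Rightarrow> (nat \<Rightarrow> real) \<Rightarrow> nat \<Rightarrow> real" where
  "app k T x = (\<lambda>i. \<Sum>j<k. T i j * x j)"
definition ip :: "nat \<Rightarrow> (nat \<Rightarrow> real) \<Rightarrow> (nat \<Rightarrow> real) \<Rightarrow> real" where
  "ip k x y = (\<Sum>i<k. x i * y i)"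
definition dt :: "nat \<Rightarrow> (nat \<Rightarrow> nat \<Rightarrow> real) \<Rightarrow> real" where
  "dt k T = Determinant.det (Matrix.mat k k (\<lambda>(i,j). T i j))"
definition mm :: "nat \<Rightarrow> (nat \<Rightarrow> nat \<Rightarrow> real) \<Rightarrow> (nat \<Rightarrow> nat \<Rightarrow> real) \<Rightarrow> nat \<Rightarrow> nat \<Rightarrow> real" where
  "mm k A B = (\<lambda>i j. \<Sum>l<k. A i l * B l j)"
definition idm :: "nat \<Rightarrow> nat \<Rightarrow> real" where
  "idm = (\<lambda>i j. if i = j then 1 else 0)"

lemma mat_mm: "Matrix.mat k k (\<lambda>(i,j). mm k A B i j) =
   Matrix.mat k k (\<lambda>(i,j). A i j) * Matrix.mat k k (\<lambda>(i,j). B i j)"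
  by (rule eq_matI) (auto simp: mm_def scalar_prod_def atLeast0LessThan intro!: sum.cong)

lemma dt_mm: "dt k (mm k A B) = dt k A * dt k B"
  unfolding dt_def mat_mm by (rule det_mult) auto

lemma dt_cong: "(\<And>i j. i < k \<Longrightarrow> j < k \<Longrightarrow> A i j = B i j) \<Longrightarrow> dt k A = dt k B"
  unfolding dt_def by (rule arg_cong[where f=Determinant.det]) (rule eq_matI, auto)

lemma dt_idm: "dt k idm = 1"
proof -
  have "Matrix.mat k k (\<lambda>(i,j). idm i j) = 1\<^sub>m k" by (rule eq_matI) (auto simp: idm_def)
  thus ?thesis by (simp add: dt_def)
qed

lemma dt_diag: "dt k (\<lambda>i j. if i = j then d i else 0) = (\<Prod>i<k. d i)"
proof -
  let ?A = "Matrix.mat k k (\<lambda>(i,j). (\<lambda>i j. if i = j then d i else 0) i j)"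
  have "Determinant.det ?A = prod_list (diag_mat ?A)"
    by (rule det_upper_triangular[of _ k]) (auto simp: upper_triangular_def)
  also have "\<dots> = (\<Prod>i<k. d i)" by (simp add: prod_list_diag_prod atLeast0LessThan)
  finally show ?thesis by (simp add: dt_def)
qed

lemma app_mm: "app k (mm k A B) x = app k A (app k B x)"
  unfolding app_def mm_def
  by (rule ext) (simp add: sum_distrib_left sum_distrib_right mult.assoc, rule sum.swap)

lemma ip_app_transp: "ip k (app k T x) y = ip k x (app k (\<lambda>i j. T j i) y)"
  unfolding app_def ip_def
  by (simp add: sum_distrib_left sum_distrib_right mult_ac, rule sum.swap)

lemma ip_comm: "ip k x y = ip k y x" unfolding ip_def by (simp add: mult.commute)

lemma app_cong: "(\<And>j. j < k \<Longrightarrow> x j = y j) \<Longrightarrow> app k T x i = app k T y i"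
  unfolding app_def by simp

lemma dt_inverse:
  assumes "dt k T \<noteq> 0"
  shows "\<exists>B. \<forall>x i. i < k \<longrightarrow> app k B (app k T x) i = x i"
proof -
  let ?A = "Matrix.mat k k (\<lambda>(i,j). T i j)"
  have A: "?A \<in> carrier_mat k k" by simp
  note adj = adj_mat[OF A]
  define B where "B = (\<lambda>i j. adj_mat ?A $$ (i,j) / dt k T)"
  have "mm k B T i j = idm i j" if "i < k" "j < k" for i j
  proof -
    have "(adj_mat ?A * ?A) $$ (i,j) = (Determinant.det ?A \<cdot>\<^sub>m 1\<^sub>m k) $$ (i,j)" using adj(3) by simp
    hence "(\<Sum>l<k. adj_mat ?A $$ (i,l) * T l j) = dt k T * idm i j"
      using that adj(1) by (auto simp: scalar_prod_def atLeast0LessThan dt_def idm_def)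
    thus ?thesis using assms unfolding mm_def B_def
      by (simp add: sum_divide_distrib[symmetric] mult.commute[of _ "T _ _"] times_divide_eq_right)
  qed
  hence "app k B (app k T x) i = x i" if "i < k" for x i
  proof -
    have "app k B (app k T x) i = (\<Sum>j<k. mm k B T i j * x j)" unfolding app_mm[symmetric] by (simp add: app_def)
    also have "\<dots> = (\<Sum>j<k. idm i j * x j)" using \<open>\<And>i j. i < k \<Longrightarrow> j < k \<Longrightarrow> mm k B T i j = idm i j\<close> that by simp
    also have "\<dots> = (\<Sum>j<k. if i = j then x j else 0)" by (rule sum.cong) (auto simp: idm_def)
    also have "\<dots> = x i" using that by simp
    finally show ?thesis .
  qed
  thus ?thesis by blast
qed

lemma app_diag: "i < k \<Longrightarrow> app k (\<lambda>i j. if i = j then d i else 0) y i = d i * y i"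
proof -
  assume i: "i < k"
  have "app k (\<lambda>i j. if i = j then d i else 0) y i = (\<Sum>j<k. if i = j then d i * y j else 0)"
    unfolding app_def by (rule sum.cong) auto
  also have "\<dots> = d i * y i" using i by simp
  finally show ?thesis .
qed

lemma app_idm: "i < k \<Longrightarrow> app k idm y i = y i"
  using app_diag[of i k "\<lambda>_. 1" y] by (simp add: idm_def)

lemma app_eq_idm: "(\<And>i j. i < k \<Longrightarrow> j < k \<Longrightarrow> M i j = idm i j) \<Longrightarrow> i < k \<Longrightarrow> app k M y i = y i"
  using app_idm[of i k y] unfolding app_def by simp

lemma ip_cong: "(\<And>i. i < k \<Longrightarrow> x i = x' i) \<Longrightarrow> (\<And>i. i < k \<Longrightarrow> y i = y' i) \<Longrightarrow> ip k x y = ip k x' y'"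
  unfolding ip_def by simp

lemma ip_self_nonneg: "0 \<le> ip k x x"
  unfolding ip_def by (auto intro: sum_nonneg)

lemma householder:
  assumes k: "0 < k" and e: "ip k e e = 1"
  shows "\<exists>Q. dt k Q ^ 2 = 1 \<and> (\<forall>y. ip k (app k Q y) (app k Q y) = ip k y y) \<and> (\<forall>y. app k Q y 0 = ip k e y)"
proof -
  define v where "v = (\<lambda>i. e i - (if i = 0 then 1 else 0::real))"
  have sv: "ip k v v = 2 - 2 * e 0"
  proof -
    have "ip k v v = (\<Sum>i<k. e i * e i - 2 * (if i = 0 then e i else 0) + (if i = 0 then 1 else 0))"
      unfolding ip_def v_def by (rule sum.cong) (auto simp: algebra_simps)
    also have "\<dots> = ip k e e - 2 * e 0 + 1"
      using k by (simp add: sum.distrib sum_subtractf ip_def sum_distrib_left[symmetric])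
    finally show ?thesis using e by simp
  qed
  have ipv: "ip k v y = ip k e y - y 0" for y
  proof -
    have "ip k v y = (\<Sum>i<k. e i * y i - (if i = 0 then y i else 0))"
      unfolding ip_def v_def by (rule sum.cong) (auto simp: algebra_simps)
    also have "\<dots> = ip k e y - y 0" using k by (simp add: sum_subtractf ip_def)
    finally show ?thesis .
  qed
  show ?thesis
  proof (cases "ip k v v = 0")
    case True
    have v0: "v i = 0" if "i < k" for i
    proof -
      have "(\<Sum>i<k. v i * v i) = 0" using True by (simp add: ip_def)
      hence "\<forall>i\<in>{..<k}. v i * v i = 0" by (subst (asm) sum_nonneg_eq_0_iff) auto
      thus ?thesis using that by simp
    qed
    have "e 0 = 1" using True sv by simp
    show ?thesis
    proof (intro exI[of _ idm] conjI allI)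
      show "dt k idm ^ 2 = 1" by (simp add: dt_idm)
      fix y
      show "ip k (app k idm y) (app k idm y) = ip k y y" by (rule ip_cong) (auto simp: app_idm)
      show "app k idm y 0 = ip k e y" using ipv[of y] True k by (simp add: app_idm ip_def v0)
    qed
  next
    case False
    define c where "c = 2 / ip k v v"
    define Q where "Q = (\<lambda>i j. idm i j - c * v i * v j)"
    have cv0: "c * v 0 = -1" using False sv unfolding c_def v_def by (simp add: field_simps)
    have QQ: "mm k Q Q i j = idm i j" if "i < k" "j < k" for i j
    proof -
      have "mm k Q Q i j = (\<Sum>l<k. idm i l * idm l j - c * v i * (v l * idm l j) - c * v j * (v l * idm i l)
                + c * c * v i * v j * (v l * v l))"
        unfolding mm_def Q_def by (rule sum.cong) (auto simp: algebra_simps)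
      also have "\<dots> = (\<Sum>l<k. idm i l * idm l j) - c * v i * (\<Sum>l<k. v l * idm l j)
         - c * v j * (\<Sum>l<k. v l * idm i l) + c * c * v i * v j * ip k v v"
        by (simp add: sum.distrib sum_subtractf sum_distrib_left ip_def)
      also have "(\<Sum>l<k. idm i l * idm l j) = idm i j"
      proof -
        have "(\<Sum>l<k. idm i l * idm l j) = (\<Sum>l<k. if l = i then idm i j else 0)"
          by (rule sum.cong) (auto simp: idm_def)
        thus ?thesis using that by simp
      qed
      also have "(\<Sum>l<k. v l * idm l j) = v j"
      proof -
        have "(\<Sum>l<k. v l * idm l j) = (\<Sum>l<k. if l = j then v j else 0)"
          by (rule sum.cong) (auto simp: idm_def)
        thus ?thesis using that by simp
      qed
      also have "(\<Sum>l<k. v l * idm i l) = v i"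
      proof -
        have "(\<Sum>l<k. v l * idm i l) = (\<Sum>l<k. if l = i then v i else 0)"
          by (rule sum.cong) (auto simp: idm_def)
        thus ?thesis using that by simp
      qed
      also have "c * ip k v v = 2" using False by (simp add: c_def)
      hence "c * c * v i * v j * ip k v v = 2 * c * v i * v j" by (simp add: algebra_simps)
      finally show ?thesis by simp
    qed
    have symQ: "(\<lambda>i j. Q j i) = Q" unfolding Q_def idm_def by (auto simp: fun_eq_iff)
    show ?thesis
    proof (intro exI[of _ Q] conjI allI)
      have "dt k Q * dt k Q = dt k (mm k Q Q)" by (simp add: dt_mm)
      also have "\<dots> = dt k idm" by (rule dt_cong) (simp add: QQ)
      finally show "dt k Q ^ 2 = 1" by (simp add: dt_idm power2_eq_square)
      fix y
      have "ip k (app k Q y) (app k Q y) = ip k y (app k (\<lambda>i j. Q j i) (app k Q y))"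
        by (rule ip_app_transp)
      also have "\<dots> = ip k y (app k (mm k Q Q) y)" by (simp add: symQ app_mm)
      also have "\<dots> = ip k y y" by (rule ip_cong) (auto intro: app_eq_idm QQ)
      finally show "ip k (app k Q y) (app k Q y) = ip k y y" .
      have "app k Q y 0 = (\<Sum>j<k. idm 0 j * y j) - c * v 0 * ip k v y"
        unfolding app_def Q_def ip_def by (simp add: algebra_simps sum_subtractf sum_distrib_left)
      also have "(\<Sum>j<k. idm 0 j * y j) = y 0" using app_idm[OF k, of y] by (simp add: app_def)
      finally show "app k Q y 0 = ip k e y" using cv0 ipv[of y] by simp
    qed
  qed
qed

lemma perturb:
  assumes k: "0 < k" and e: "ip k e e = 1" and a: "0 < a" and b: "0 < b"
  shows "\<exists>N. dt k N ^ 2 = a ^ k * b \<and>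
     (\<forall>y. ip k (app k N y) (app k N y) = a * (ip k y y + (b - 1) * (ip k e y)^2))"
proof -
  obtain Q where Q: "dt k Q ^ 2 = 1" "\<And>y. ip k (app k Q y) (app k Q y) = ip k y y"
     "\<And>y. app k Q y 0 = ip k e y" using householder[OF k e] by blast
  define d where "d = (\<lambda>i::nat. if i = 0 then sqrt (a * b) else sqrt a)"
  define D where "D = (\<lambda>i j. if i = j then d i else (0::real))"
  define N where "N = mm k Q (mm k D Q)"
  obtain k' where k': "k = Suc k'" using k by (cases k) auto
  have dtD: "dt k D = sqrt (a * b) * sqrt a ^ k'"
    unfolding D_def dt_diag k' prod.lessThan_Suc_shift by (simp add: d_def)
  have "dt k N ^ 2 = dt k Q ^ 2 * dt k Q ^ 2 * dt k D ^ 2"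
    unfolding N_def dt_mm by (simp add: power_mult_distrib)
  also have "\<dots> = dt k D ^ 2" using Q(1) by simp
  also have "\<dots> = (sqrt (a * b))^2 * ((sqrt a)^2) ^ k'" unfolding dtD
    by (simp add: power_mult_distrib power_mult[symmetric] mult.commute[of 2])
  also have "\<dots> = a ^ k * b" using a b by (simp add: k')
  finally have 1: "dt k N ^ 2 = a ^ k * b" .
  have 2: "ip k (app k N y) (app k N y) = a * (ip k y y + (b - 1) * (ip k e y)^2)" for y
  proof -
    define w where "w = app k Q y"
    have "ip k (app k N y) (app k N y) = ip k (app k D w) (app k D w)"
      unfolding N_def app_mm w_def Q(2) ..
    also have "\<dots> = (\<Sum>i<k. (d i)^2 * (w i)^2)"
      unfolding ip_def D_def by (rule sum.cong) (auto simp: app_diag power2_eq_square)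
    also have "\<dots> = a * b * (w 0)^2 + (\<Sum>i<k'. a * (w (Suc i))^2)"
      unfolding k' sum.lessThan_Suc_shift using a b by (simp add: d_def)
    also have "\<dots> = a * (ip k w w + (b - 1) * (w 0)^2)"
      unfolding ip_def k' sum.lessThan_Suc_shift by (simp add: algebra_simps power2_eq_square sum_distrib_left)
    also have "ip k w w = ip k y y" unfolding w_def Q(2) ..
    also have "w 0 = ip k e y" unfolding w_def Q(3) ..
    finally show ?thesis .
  qed
  show ?thesis using 1 2 by blast
qed

lemma dt_leibniz: "dt k (\<lambda>i j. f (i,j)) = (\<Sum>p\<in>{p. p permutes {0..<k}}. signof p * (\<Prod>i=0..<k. f (i, p i)))"
proof -
  have "dt k (\<lambda>i j. f (i,j)) = (\<Sum>p\<in>{p. p permutes {0..<k}}. signof p *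
      (\<Prod>i=0..<k. Matrix.mat k k (\<lambda>(i,j). f (i,j)) $$ (i, p i)))"
    unfolding dt_def det_def by simp
  also have "\<dots> = (\<Sum>p\<in>{p. p permutes {0..<k}}. signof p * (\<Prod>i=0..<k. f (i, p i)))"
  proof (rule sum.cong[OF refl])
    fix p assume "p \<in> {p. p permutes {0..<k}}"
    hence p: "p permutes {0..<k}" by simp
    show "signof p * (\<Prod>i=0..<k. Matrix.mat k k (\<lambda>(i,j). f (i,j)) $$ (i, p i)) = signof p * (\<Prod>i=0..<k. f (i, p i))"
      by (rule arg_cong[where f="\<lambda>x. signof p * x"], rule prod.cong[OF refl])
         (use permutes_in_image[OF p] in auto)
  qed
  finally show ?thesis .
qed

definition feas :: "nat \<Rightarrow> (nat \<Rightarrow> real) set \<Rightarrow> (nat \<Rightarrow> nat \<Rightarrow> real) \<Rightarrow> bool" where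
  "feas k X T \<longleftrightarrow> (\<forall>x\<in>X. ip k (app k T x) (app k T x) \<le> 1)"

lemma feas_cong: "(\<And>i j. i < k \<Longrightarrow> j < k \<Longrightarrow> T i j = T' i j) \<Longrightarrow> feas k X T = feas k X T'"
  unfolding feas_def ip_def app_def by simp

lemma exists_max:
  fixes X :: "(nat \<Rightarrow> real) set"
  assumes fin: "finite X" and eps: "0 < \<epsilon>"
    and dum: "\<And>j. j < k \<Longrightarrow> (\<lambda>i. if i = j then \<epsilon> else 0) \<in> X"
    and T0: "feas k X T0"
  shows "\<exists>T. feas k X T \<and> (\<forall>T'. feas k X T' \<longrightarrow> dt k T' ^ 2 \<le> dt k T ^ 2)"
proof -
  define I where "I = {..<k} \<times> {..<k}"
  define Top where "Top = product_topology (\<lambda>_::nat\<times>nat. euclideanreal) I"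
  define g where "g = (\<lambda>(x::nat\<Rightarrow>real) (f::nat\<times>nat\<Rightarrow>real). (\<Sum>i<k. (\<Sum>j<k. f (i,j) * x j)^2))"
  define G where "G = (\<lambda>f. \<Sum>x\<in>X. max 0 (g x f - 1))"
  define C where "C = {f \<in> topspace Top. G f \<in> {..0}}"
  define K where "K = (\<Pi>\<^sub>E ij\<in>I. {-1/\<epsilon>..1/\<epsilon>})"
  define h where "h = (\<lambda>f::nat\<times>nat\<Rightarrow>real. (\<Sum>p\<in>{p. p permutes {0..<k}}. signof p * (\<Prod>i=0..<k. f (i, p i)))^2)"
  have gfeas: "g x f = ip k (app k (\<lambda>i j. f (i,j)) x) (app k (\<lambda>i j. f (i,j)) x)" for x f
    unfolding g_def ip_def app_def by (simp add: power2_eq_square)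
  have proj: "continuous_map Top euclideanreal (\<lambda>f. f (i,j))" if "i < k" "j < k" for i j
    unfolding Top_def by (rule continuous_map_product_projection) (use that in \<open>auto simp: I_def\<close>)
  have contg: "continuous_map Top euclideanreal (g x)" for x
    unfolding g_def
    by (intro continuous_map_sum continuous_map_real_pow continuous_map_real_mult proj continuous_map_canonical_const finite_lessThan) auto
  have contG: "continuous_map Top euclideanreal G"
    unfolding G_def
    by (intro continuous_map_sum continuous_map_real_max contg continuous_map_canonical_const fin continuous_map_diff)
  have closedC: "closedin Top C"
    unfolding C_def by (rule closedin_continuous_map_preimage[OF contG]) simp
  have Cfeas: "G f \<le> 0 \<longleftrightarrow> (\<forall>x\<in>X. g x f \<le> 1)" for f
  proof -
    have "G f \<le> 0 \<longleftrightarrow> (\<forall>x\<in>X. max 0 (g x f - 1) = 0)"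
      unfolding G_def using sum_nonneg_eq_0_iff[OF fin, of "\<lambda>x. max 0 (g x f - 1)"]
      by (smt (verit) sum_nonneg)
    also have "\<dots> \<longleftrightarrow> (\<forall>x\<in>X. g x f \<le> 1)"
      by (intro ball_cong refl) linarith
    finally show ?thesis .
  qed
  have CK: "C \<subseteq> K"
  proof
    fix f assume f: "f \<in> C"
    hence top: "f \<in> (\<Pi>\<^sub>E ij\<in>I. UNIV)" unfolding C_def Top_def by simp
    have gle: "\<forall>x\<in>X. g x f \<le> 1" using f Cfeas unfolding C_def by auto
    show "f \<in> K" unfolding K_def
    proof (rule PiE_I)
      fix ij assume "ij \<in> I"
      then obtain i j where ij: "ij = (i,j)" "i < k" "j < k" unfolding I_def by auto
      have "g (\<lambda>i. if i = j then \<epsilon> else 0) f \<le> 1" using gle dum[OF ij(3)] by auto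
      moreover have "g (\<lambda>i. if i = j then \<epsilon> else 0) f = (\<Sum>i'<k. (f (i',j) * \<epsilon>)^2)"
        unfolding g_def
      proof (rule sum.cong[OF refl])
        fix i' assume "i' \<in> {..<k}"
        have "(\<Sum>j'<k. f (i', j') * (if j' = j then \<epsilon> else 0)) = (\<Sum>j'<k. if j' = j then f (i',j) * \<epsilon> else 0)"
          by (rule sum.cong) auto
        also have "\<dots> = f (i',j) * \<epsilon>" using ij by simp
        finally show "(\<Sum>j'<k. f (i', j') * (if j' = j then \<epsilon> else 0))^2 = (f (i',j) * \<epsilon>)^2" by simp
      qed
      moreover have "(f (i,j) * \<epsilon>)^2 \<le> (\<Sum>i'<k. (f (i',j) * \<epsilon>)^2)"
        by (rule member_le_sum) (use ij in auto)
      ultimately have "(f (i,j) * \<epsilon>)^2 \<le> 1" by linarith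
      hence "\<bar>f (i,j) * \<epsilon>\<bar> \<le> 1" by (simp add: abs_square_le_1)
      hence "\<bar>f (i,j)\<bar> \<le> 1 / \<epsilon>" using eps by (simp add: abs_mult field_simps)
      thus "f ij \<in> {-1/\<epsilon>..1/\<epsilon>}" using ij by auto
    next
      fix ij assume "ij \<notin> I" thus "f ij = undefined" using top by auto
    qed
  qed
  have compK: "compactin Top K"
    unfolding K_def Top_def by (subst compactin_PiE) auto
  have compC: "compactin Top C" by (rule closed_compactin[OF compK CK closedC])
  have conth: "continuous_map Top euclideanreal h"
    unfolding h_def
    by (intro continuous_map_sum continuous_map_real_pow continuous_map_real_mult continuous_map_prod proj
         continuous_map_canonical_const finite_lessThan finite_atLeastLessThan)
       (auto simp: finite_permutations dest: permutes_in_image)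
  have "compactin euclideanreal (h ` C)" by (rule image_compactin[OF compC conth])
  hence comp: "compact (h ` C)" by simp
  define f0 where "f0 = restrict (\<lambda>(i,j). T0 i j) I"
  have f0C: "f0 \<in> C"
  proof -
    have "f0 \<in> topspace Top" unfolding Top_def f0_def by simp
    moreover have "g x f0 \<le> 1" if "x \<in> X" for x
    proof -
      have "g x f0 = ip k (app k T0 x) (app k T0 x)" unfolding gfeas ip_def app_def f0_def I_def by simp
      thus ?thesis using T0 that unfolding feas_def by simp
    qed
    ultimately show ?thesis unfolding C_def using Cfeas by auto
  qed
  have "h ` C \<noteq> {}" using f0C by auto
  from compact_attains_sup[OF comp this] obtain m where m: "m \<in> h ` C" "\<And>y. y \<in> h ` C \<Longrightarrow> y \<le> m" by blast
  then obtain fs where fs: "fs \<in> C" "m = h fs" by blast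
  define T where "T = (\<lambda>i j. fs (i,j))"
  have hdt: "h f = dt k (\<lambda>i j. f (i,j)) ^ 2" for f unfolding h_def dt_leibniz ..
  have feasC: "feas k X (\<lambda>i j. f (i,j))" if "f \<in> C" for f
    using that Cfeas unfolding C_def feas_def gfeas by auto
  show ?thesis
  proof (intro exI[of _ T] conjI allI impI)
    show "feas k X T" unfolding T_def by (rule feasC[OF fs(1)])
    fix T' assume T': "feas k X T'"
    define f' where "f' = restrict (\<lambda>(i,j). T' i j) I"
    have eq: "(\<lambda>i j. f' (i,j)) i j = T' i j" if "i < k" "j < k" for i j
      using that unfolding f'_def I_def by simp
    have "f' \<in> C"
    proof -
      have "f' \<in> topspace Top" unfolding Top_def f'_def by simp
      moreover have "feas k X (\<lambda>i j. f' (i,j))" using T' feas_cong[of k "\<lambda>i j. f' (i,j)" T' X] eq by blast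
      ultimately show ?thesis unfolding C_def using Cfeas unfolding feas_def gfeas by auto
    qed
    hence "h f' \<le> h fs" using m fs by auto
    moreover have "h f' = dt k T' ^ 2" unfolding hdt using dt_cong[of k "\<lambda>i j. f' (i,j)" T'] eq by simp
    ultimately show "dt k T' ^ 2 \<le> dt k T ^ 2" unfolding T_def hdt by simp
  qed
qed

lemma bern_aux: "0 \<le> (y::real) \<Longrightarrow> (1 + y) ^ n * (1 - real n * y) \<le> 1"
proof (induction n)
  case 0 thus ?case by simp
next
  case (Suc n)
  have "(1 + y) ^ Suc n * (1 - real (Suc n) * y) = (1 + y) ^ n * ((1 - real n * y) - (real n + 1) * y^2)"
    by (simp add: algebra_simps power2_eq_square)
  also have "\<dots> \<le> (1 + y) ^ n * (1 - real n * y)"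
    using Suc.prems by (intro mult_left_mono) auto
  also have "\<dots> \<le> 1" using Suc.IH[OF Suc.prems] .
  finally show ?case .
qed

lemma john:
  fixes X :: "(nat \<Rightarrow> real) set"
  assumes k: "0 < k" and fin: "finite X" and eps: "0 < \<epsilon>"
    and dum: "\<And>j. j < k \<Longrightarrow> (\<lambda>i. if i = j then \<epsilon> else 0) \<in> X"
    and T0: "feas k X T0" "dt k T0 \<noteq> 0"
  shows "\<exists>T. feas k X T \<and> dt k T \<noteq> 0 \<and> (\<forall>z. \<exists>x\<in>X. ip k z z \<le> real k * (ip k (app k T x) z)^2)"
proof -
  obtain T where T: "feas k X T" "\<And>T'. feas k X T' \<Longrightarrow> dt k T' ^ 2 \<le> dt k T ^ 2"
    using exists_max[OF fin eps dum T0(1)] by blast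
  have "0 < dt k T0 ^ 2" using T0(2) by simp
  also have "\<dots> \<le> dt k T ^ 2" using T(2)[OF T0(1)] .
  finally have dtpos: "0 < dt k T ^ 2" .
  have Xne: "X \<noteq> {}" using dum[OF k] by auto
  have main: "\<exists>x\<in>X. ip k z z \<le> real k * (ip k (app k T x) z)^2" for z
  proof (rule ccontr)
    assume "\<not> ?thesis"
    hence lt: "\<And>x. x \<in> X \<Longrightarrow> real k * (ip k (app k T x) z)^2 < ip k z z" by force
    obtain x1 where "x1 \<in> X" using Xne by auto
    have zpos: "0 < ip k z z" using lt[OF \<open>x1 \<in> X\<close>] k
      by (smt (verit) mult_nonneg_nonneg of_nat_0_le_iff zero_le_power2)
    define nz where "nz = sqrt (ip k z z)"
    have nz: "0 < nz" "nz^2 = ip k z z" using zpos unfolding nz_def by auto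
    define e where "e = (\<lambda>i. z i / nz)"
    have ipe: "ip k e w = ip k z w / nz" for w
      unfolding ip_def e_def by (simp add: sum_divide_distrib)
    have ee: "ip k e e = 1"
    proof -
      have "ip k e e = ip k z z / nz^2"
        unfolding ip_def e_def by (simp add: sum_divide_distrib power2_eq_square)
      thus ?thesis using nz zpos by simp
    qed
    define c where "c = Max ((\<lambda>x. (ip k e (app k T x))^2) ` X)"
    have "c \<in> (\<lambda>x. (ip k e (app k T x))^2) ` X"
      unfolding c_def using fin Xne by (intro Max_in) auto
    then obtain xm where xm: "xm \<in> X" "c = (ip k e (app k T xm))^2" by blast
    have cge: "(ip k e (app k T x))^2 \<le> c" if "x \<in> X" for x
      unfolding c_def using fin that by (intro Max_ge) auto
    have c0: "0 \<le> c" using xm by simp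
    have kc: "real k * c < 1"
    proof -
      have "c = (ip k z (app k T xm))^2 / nz^2" unfolding xm ipe by (simp add: power_divide)
      also have "\<dots> = (ip k (app k T xm) z)^2 / ip k z z" using nz by (simp add: ip_comm)
      finally have "real k * c = real k * (ip k (app k T xm) z)^2 / ip k z z" by simp
      also have "\<dots> < 1" using lt[OF xm(1)] zpos by simp
      finally show ?thesis .
    qed
    define x0 where "x0 = (if c = 0 then 1 else (1 / (real k * c) - 1) / 2)"
    have x0pos: "0 < x0"
    proof (cases "c = 0")
      case False
      hence "0 < real k * c" using c0 k by simp
      hence "1 < 1 / (real k * c)" using kc by simp
      thus ?thesis using False unfolding x0_def by simp
    qed (simp add: x0_def)
    have kcx: "real k * c * (1 + x0) < 1"
    proof (cases "c = 0")
      case False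
      hence pos: "0 < real k * c" using c0 k by simp
      have "real k * c * (1 + x0) = real k * c * (1 + (1 / (real k * c) - 1) / 2)"
        using False by (simp add: x0_def)
      also have "\<dots> = (real k * c + 1) / 2" using pos False k by (simp add: divide_simps)
      also have "\<dots> < 1" using kc by simp
      finally show ?thesis .
    qed (simp add: x0_def)
    define a where "a = 1 / (1 + x0 * c)"
    have apos: "0 < a" unfolding a_def using x0pos c0 by (simp add: add_pos_nonneg)
    obtain N where N: "dt k N ^ 2 = a ^ k * (1 + x0)"
      "\<And>y. ip k (app k N y) (app k N y) = a * (ip k y y + ((1 + x0) - 1) * (ip k e y)^2)"
      using perturb[OF k ee apos, of "1 + x0"] x0pos by auto
    define T' where "T' = mm k N T"
    have "feas k X T'"
      unfolding feas_def
    proof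
      fix x assume x: "x \<in> X"
      have "ip k (app k T' x) (app k T' x) = a * (ip k (app k T x) (app k T x) + x0 * (ip k e (app k T x))^2)"
        unfolding T'_def app_mm N(2) by simp
      also have "\<dots> \<le> a * (1 + x0 * c)"
        using T(1) x cge[OF x] apos x0pos unfolding feas_def
        by (intro mult_left_mono add_mono mult_left_mono) auto
      also have "\<dots> = 1" unfolding a_def using x0pos c0
        by (smt (verit) mult_nonneg_nonneg nonzero_divide_eq_eq)
      finally show "ip k (app k T' x) (app k T' x) \<le> 1" .
    qed
    hence le: "dt k T' ^ 2 \<le> dt k T ^ 2" by (rule T(2))
    define y where "y = x0 * c"
    have y0: "0 \<le> y" unfolding y_def using x0pos c0 by simp
    have ky: "real k * y < 1"
    proof -
      have "real k * y = real k * c * x0" by (simp add: y_def mult_ac)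
      also have "\<dots> \<le> real k * c * (1 + x0)" using c0 by (intro mult_left_mono) auto
      finally show ?thesis using kcx by linarith
    qed
    have b1: "(1 + y) ^ k * (1 - real k * y) \<le> 1" by (rule bern_aux[OF y0])
    have "(1 + y) ^ k \<le> 1 / (1 - real k * y)" using b1 ky by (simp add: field_simps)
    also have "\<dots> < 1 + x0"
    proof -
      have "(1 + x0) * (1 - real k * y) = 1 + x0 * (1 - real k * c * (1 + x0))"
        unfolding y_def by (simp add: algebra_simps)
      also have "\<dots> > 1" using x0pos kcx by simp
      finally show ?thesis using ky by (simp add: field_simps)
    qed
    finally have yk: "(1 + y) ^ k < 1 + x0" .
    have "1 < a ^ k * (1 + x0)"
    proof -
      have "a ^ k = 1 / (1 + y) ^ k" unfolding a_def y_def by (simp add: power_one_over)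
      moreover have "0 < (1 + y) ^ k" using y0 by simp
      ultimately show ?thesis using yk by (simp add: field_simps)
    qed
    hence "dt k T ^ 2 < a ^ k * (1 + x0) * dt k T ^ 2" using dtpos by simp
    also have "\<dots> = dt k T' ^ 2" unfolding T'_def dt_mm N(1)[symmetric] by (simp add: power_mult_distrib)
    finally show False using le by simp
  qed
  show ?thesis
  proof (intro exI[of _ T] conjI allI)
    show "feas k X T" by (rule T(1))
    show "dt k T \<noteq> 0" using dtpos by auto
    show "\<exists>x\<in>X. ip k z z \<le> real k * (ip k (app k T x) z)^2" for z by (rule main)
  qed
qed



lemma two_inf_nonneg: "0 \<le> two_inf k (U :: 'r::finite \<Rightarrow> nat \<Rightarrow> real)"
proof -
  have "sqrt (\<Sum>i<k. (U undefined i)^2) \<le> two_inf k U"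
    unfolding two_inf_def by (rule Max_ge) auto
  moreover have "0 \<le> sqrt (\<Sum>i<k. (U undefined i)^2)" by (auto intro: sum_nonneg)
  ultimately show ?thesis by linarith
qed

lemma two_inf_le: "(\<And>x. sqrt (\<Sum>i<k. (U x i)^2) \<le> c) \<Longrightarrow> two_inf k (U :: 'r::finite \<Rightarrow> nat \<Rightarrow> real) \<le> c"
  unfolding two_inf_def by (rule Max.boundedI) auto

lemma two_inf_ge: "sqrt (\<Sum>i<k. (U x i)^2) \<le> two_inf k (U :: 'r::finite \<Rightarrow> nat \<Rightarrow> real)"
  unfolding two_inf_def by (rule Max_ge) auto

lemma maxnorm_bdd: "bdd_below {two_inf k U * two_inf k V | k U V.
      \<forall>s a. M s a = (\<Sum>i<k. U s i * V a i)}" for M :: "'s::finite \<Rightarrow> 'a::finite \<Rightarrow> real"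
  by (rule bdd_belowI[of _ 0]) (auto intro!: mult_nonneg_nonneg two_inf_nonneg)

lemma maxnorm_le_fact:
  fixes M :: "'s::finite \<Rightarrow> 'a::finite \<Rightarrow> real"
  assumes "\<forall>s a. M s a = (\<Sum>i<k. U s i * V a i)"
  shows "maxnorm M \<le> two_inf k U * two_inf k V"
  unfolding maxnorm_def by (rule cInf_lower[OF _ maxnorm_bdd]) (use assms in blast)

lemma maxnorm_zero:
  fixes M :: "'s::finite \<Rightarrow> 'a::finite \<Rightarrow> real"
  assumes "\<forall>s a. M s a = 0"
  shows "maxnorm M \<le> 0"
proof -
  have "maxnorm M \<le> two_inf 0 (\<lambda>(s::'s) (i::nat). 0::real) * two_inf 0 (\<lambda>(a::'a) (i::nat). 0::real)"
    by (rule maxnorm_le_fact) (use assms in simp)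
  also have "\<dots> = 0" by (simp add: two_inf_def)
  finally show ?thesis .
qed

lemma maxnorm_lowrank:
  fixes Y :: "'s::finite \<Rightarrow> 'a::finite \<Rightarrow> real"
  assumes Y: "\<forall>s a. Y s a = (\<Sum>i<k. u s i * v a i)" and m: "\<forall>s a. \<bar>Y s a\<bar> \<le> m"
  shows "maxnorm Y \<le> sqrt (real k) * m"
proof -
  have m0: "0 \<le> m" using m by (meson abs_ge_zero order_trans)
  show ?thesis
  proof (cases "k = 0 \<or> m = 0")
    case True
    hence "\<forall>s a. Y s a = 0" using Y m by auto
    hence "maxnorm Y \<le> 0" by (rule maxnorm_zero)
    also have "0 \<le> sqrt (real k) * m" using m0 by simp
    finally show ?thesis .
  next
    case False
    hence k: "0 < k" and mpos: "0 < m" using m0 by auto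
    define L where "L = 1 + (\<Sum>a\<in>UNIV. \<Sum>j<k. \<bar>v a j\<bar>)"
    have L1: "1 \<le> L" unfolding L_def by (auto intro!: sum_nonneg)
    define \<epsilon> where "\<epsilon> = m / L"
    have eps: "0 < \<epsilon>" unfolding \<epsilon>_def using mpos L1 by simp
    have vL: "\<bar>v a j\<bar> \<le> L" if "j < k" for a j
    proof -
      have "\<bar>v a j\<bar> \<le> (\<Sum>j<k. \<bar>v a j\<bar>)" by (rule member_le_sum) (use that in auto)
      also have "\<dots> \<le> (\<Sum>a\<in>UNIV. \<Sum>j<k. \<bar>v a j\<bar>)"
        by (rule member_le_sum[of _ UNIV "\<lambda>a. \<Sum>j<k. \<bar>v a j\<bar>"]) (auto intro: sum_nonneg)
      finally show ?thesis unfolding L_def by simp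
    qed
    have epsv: "\<epsilon> * \<bar>v a j\<bar> \<le> m" if "j < k" for a j
    proof -
      have "\<epsilon> * \<bar>v a j\<bar> \<le> \<epsilon> * L" using vL[OF that] eps by (intro mult_left_mono) auto
      also have "\<dots> = m" unfolding \<epsilon>_def using L1 by simp
      finally show ?thesis .
    qed
    define dm where "dm = (\<lambda>j::nat. (\<lambda>i::nat. if i = j then \<epsilon> else 0))"
    define X where "X = range u \<union> dm ` {..<k}"
    have finX: "finite X" unfolding X_def by simp
    have dum: "\<And>j. j < k \<Longrightarrow> (\<lambda>i. if i = j then \<epsilon> else 0) \<in> X" unfolding X_def dm_def by auto
    define \<eta> where "\<eta> = 1 / sqrt (1 + (\<Sum>x\<in>X. ip k x x))"
    have S0: "0 \<le> (\<Sum>x\<in>X. ip k x x)" by (auto intro: sum_nonneg ip_self_nonneg)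
    have eta: "0 < \<eta>" unfolding \<eta>_def using S0 by (simp add: add_pos_nonneg)
    define T0 where "T0 = (\<lambda>(i::nat) (j::nat). if i = j then \<eta> else 0)"
    have appT0: "app k T0 x i = \<eta> * x i" if "i < k" for x i unfolding T0_def using app_diag[OF that] by simp
    have "feas k X T0" unfolding feas_def
    proof
      fix x assume x: "x \<in> X"
      have "ip k (app k T0 x) (app k T0 x) = \<eta>^2 * ip k x x"
        unfolding ip_def by (simp add: appT0 sum_distrib_left power2_eq_square mult_ac)
      also have "\<dots> = ip k x x / (1 + (\<Sum>x\<in>X. ip k x x))"
        unfolding \<eta>_def using S0 by (simp add: power_divide)
      also have "\<dots> \<le> 1"
      proof -
        have "ip k x x \<le> (\<Sum>x\<in>X. ip k x x)" by (rule member_le_sum[OF x ip_self_nonneg finX])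
        thus ?thesis using S0 by simp
      qed
      finally show "ip k (app k T0 x) (app k T0 x) \<le> 1" .
    qed
    moreover have "dt k T0 \<noteq> 0" unfolding T0_def dt_diag using eta by simp
    ultimately obtain T where T: "feas k X T" "dt k T \<noteq> 0"
      "\<And>z. \<exists>x\<in>X. ip k z z \<le> real k * (ip k (app k T x) z)^2"
      using john[OF k finX eps dum] by blast
    obtain B where B: "\<And>x i. i < k \<Longrightarrow> app k B (app k T x) i = x i" using dt_inverse[OF T(2)] by blast
    define z where "z = (\<lambda>a. app k (\<lambda>i j. B j i) (v a))"
    have ipz: "ip k (app k T x) (z a) = ip k x (v a)" for x a
    proof -
      have "ip k (app k T x) (z a) = ip k (app k B (app k T x)) (v a)"
        unfolding z_def by (rule ip_app_transp[symmetric])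
      also have "\<dots> = ip k x (v a)" by (rule ip_cong) (auto simp: B)
      finally show ?thesis .
    qed
    have zb: "ip k (z a) (z a) \<le> real k * m^2" for a
    proof -
      obtain x where x: "x \<in> X" "ip k (z a) (z a) \<le> real k * (ip k (app k T x) (z a))^2" using T(3) by blast
      have "\<bar>ip k x (v a)\<bar> \<le> m"
      proof (cases "x \<in> range u")
        case True
        then obtain s where "x = u s" by auto
        hence "ip k x (v a) = Y s a" using Y by (simp add: ip_def)
        thus ?thesis using m by simp
      next
        case False
        then obtain j where j: "j < k" "x = dm j" using x(1) unfolding X_def by auto
        have "ip k x (v a) = (\<Sum>i<k. if i = j then \<epsilon> * v a j else 0)"
          unfolding ip_def j dm_def by (rule sum.cong) auto
        also have "\<dots> = \<epsilon> * v a j" using j by simp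
        finally show ?thesis using epsv[OF j(1), of a] eps by (simp add: abs_mult)
      qed
      hence "(ip k x (v a))^2 \<le> m^2" by (metis abs_ge_zero power2_abs power_mono)
      thus ?thesis using x(2) unfolding ipz by (smt (verit) mult_left_mono of_nat_0_le_iff)
    qed
    define U where "U = (\<lambda>s i. app k T (u s) i)"
    have fact: "\<forall>s a. Y s a = (\<Sum>i<k. U s i * z a i)"
    proof (intro allI)
      fix s a
      have "(\<Sum>i<k. U s i * z a i) = ip k (app k T (u s)) (z a)" unfolding U_def ip_def ..
      also have "\<dots> = Y s a" unfolding ipz using Y by (simp add: ip_def)
      finally show "Y s a = (\<Sum>i<k. U s i * z a i)" ..
    qed
    have tU: "two_inf k U \<le> 1"
    proof (rule two_inf_le)
      fix s
      have "(\<Sum>i<k. (U s i)^2) = ip k (app k T (u s)) (app k T (u s))"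
        unfolding U_def ip_def by (simp add: power2_eq_square)
      also have "\<dots> \<le> 1" using T(1) unfolding feas_def X_def by auto
      finally show "sqrt (\<Sum>i<k. (U s i)^2) \<le> 1" by simp
    qed
    have tV: "two_inf k z \<le> sqrt (real k) * m"
    proof (rule two_inf_le)
      fix a
      have "(\<Sum>i<k. (z a i)^2) \<le> real k * m^2" using zb[of a] unfolding ip_def by (simp add: power2_eq_square)
      hence "sqrt (\<Sum>i<k. (z a i)^2) \<le> sqrt (real k * m^2)" by (rule real_sqrt_le_mono)
      also have "\<dots> = sqrt (real k) * m" using m0 by (simp add: real_sqrt_mult)
      finally show "sqrt (\<Sum>i<k. (z a i)^2) \<le> sqrt (real k) * m" .
    qed
    have "maxnorm Y \<le> two_inf k U * two_inf k z" by (rule maxnorm_le_fact[OF fact])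
    also have "\<dots> \<le> 1 * (sqrt (real k) * m)"
      using tU tV two_inf_nonneg[of k U] two_inf_nonneg[of k z] by (intro mult_mono) auto
    finally show ?thesis by simp
  qed
qed



lemma maxnorm_nonempty:
  fixes M :: "'s::finite \<Rightarrow> 'a::finite \<Rightarrow> real"
  shows "{two_inf k U * two_inf k V | k U V. \<forall>s a. M s a = (\<Sum>i<k. U s i * V a i)} \<noteq> {}"
proof -
  obtain g :: "nat \<Rightarrow> 'a" where g: "bij_betw g {0..<card (UNIV::'a set)} UNIV"
    using ex_bij_betw_nat_finite[of "UNIV::'a set"] by auto
  define n where "n = card (UNIV::'a set)"
  have fact: "\<forall>s a. M s a = (\<Sum>i<n. (\<lambda>s i. M s (g i)) s i * (\<lambda>a i. if g i = a then 1 else 0) a i)"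
    apply (intro allI)
    subgoal for s a
  proof -
    have "(\<Sum>i<n. M s (g i) * (if g i = a then 1 else 0)) = (\<Sum>a'\<in>UNIV. M s a' * (if a' = a then 1 else 0))"
      using sum.reindex_bij_betw[OF g, of "\<lambda>a'. M s a' * (if a' = a then 1 else 0)"]
      by (simp add: n_def atLeast0LessThan)
    also have "\<dots> = (\<Sum>a'\<in>UNIV. if a' = a then M s a else 0)" by (rule sum.cong) auto
    also have "\<dots> = M s a" by simp
    finally show ?thesis by simp
  qed
  done
  have "two_inf n (\<lambda>s i. M s (g i)) * two_inf n (\<lambda>a i. if g i = a then 1 else 0)
     \<in> {two_inf k U * two_inf k V | k U V. \<forall>s a. M s a = (\<Sum>i<k. U s i * V a i)}"
    unfolding mem_Collect_eq
    by (rule exI[of _ n], rule exI[of _ "\<lambda>s i. M s (g i)"], rule exI[of _ "\<lambda>a i. if g i = a then 1 else 0"])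
       (use fact in blast)
  thus ?thesis by auto
qed

lemma vec_sum_sq: "(norm (x :: real^'n))^2 = (\<Sum>i\<in>UNIV. (x$i)^2)"
  unfolding norm_vec_def L2_set_def by (simp add: sum_nonneg)

lemma inner_fact_bound:
  fixes D M :: "'s::finite \<Rightarrow> 'a::finite \<Rightarrow> real"
  assumes fact: "\<forall>s a. M s a = (\<Sum>i<k. U s i * V a i)"
  shows "\<bar>\<Sum>s\<in>UNIV. \<Sum>a\<in>UNIV. D s a * M s a\<bar>
     \<le> opnorm D * (sqrt (real CARD('s)) * sqrt (real CARD('a))) * (two_inf k U * two_inf k V)"
proof -
  define A where "A = mat_of D"
  define uv where "uv = (\<lambda>i. (\<chi> s. U s i) :: real^'s)"
  define vv where "vv = (\<lambda>i. (\<chi> a. V a i) :: real^'a)"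
  define on where "on = opnorm D"
  have bl: "bounded_linear (\<lambda>x. A *v x)" by simp
  have on: "norm (A *v x) \<le> on * norm x" for x
    unfolding on_def opnorm_def A_def[symmetric] using onorm[OF bl] by simp
  have on0: "0 \<le> on" unfolding on_def opnorm_def using onorm_pos_le[OF bl] A_def by simp
  have eq: "(\<Sum>s\<in>UNIV. \<Sum>a\<in>UNIV. D s a * M s a) = (\<Sum>i<k. inner (uv i) (A *v vv i))"
  proof -
    have "(\<Sum>s\<in>UNIV. \<Sum>a\<in>UNIV. D s a * M s a) = (\<Sum>s\<in>UNIV. \<Sum>a\<in>UNIV. \<Sum>i<k. U s i * (D s a * V a i))"
      using fact by (simp add: sum_distrib_left mult_ac)
    also have "\<dots> = (\<Sum>s\<in>UNIV. \<Sum>i<k. \<Sum>a\<in>UNIV. U s i * (D s a * V a i))"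
      by (rule sum.cong[OF refl], rule sum.swap)
    also have "\<dots> = (\<Sum>i<k. \<Sum>s\<in>UNIV. \<Sum>a\<in>UNIV. U s i * (D s a * V a i))"
      by (rule sum.swap)
    also have "\<dots> = (\<Sum>i<k. \<Sum>s\<in>UNIV. U s i * (\<Sum>a\<in>UNIV. D s a * V a i))"
      by (simp add: sum_distrib_left)
    also have "\<dots> = (\<Sum>i<k. inner (uv i) (A *v vv i))"
      unfolding inner_vec_def uv_def vv_def A_def mat_of_def matrix_vector_mult_def by simp
    finally show ?thesis .
  qed
  have "\<bar>\<Sum>i<k. inner (uv i) (A *v vv i)\<bar> \<le> (\<Sum>i<k. \<bar>inner (uv i) (A *v vv i)\<bar>)"
    by (rule sum_abs)
  also have "\<dots> \<le> (\<Sum>i<k. norm (uv i) * (on * norm (vv i)))"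
  proof (rule sum_mono)
    fix i
    have "\<bar>inner (uv i) (A *v vv i)\<bar> \<le> norm (uv i) * norm (A *v vv i)" by (rule Cauchy_Schwarz_ineq2)
    also have "\<dots> \<le> norm (uv i) * (on * norm (vv i))" by (rule mult_left_mono[OF on]) simp
    finally show "\<bar>inner (uv i) (A *v vv i)\<bar> \<le> norm (uv i) * (on * norm (vv i))" .
  qed
  also have "\<dots> = on * (\<Sum>i<k. \<bar>norm (uv i)\<bar> * \<bar>norm (vv i)\<bar>)"
    by (simp add: sum_distrib_left mult_ac)
  also have "\<dots> \<le> on * (L2_set (\<lambda>i. norm (uv i)) {..<k} * L2_set (\<lambda>i. norm (vv i)) {..<k})"
    by (rule mult_left_mono[OF L2_set_mult_ineq on0])
  finally have chain: "\<bar>\<Sum>i<k. inner (uv i) (A *v vv i)\<bar> \<le> on * (L2_set (\<lambda>i. norm (uv i)) {..<k} * L2_set (\<lambda>i. norm (vv i)) {..<k})" .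
  have LU: "L2_set (\<lambda>i. norm (uv i)) {..<k} \<le> sqrt (real CARD('s)) * two_inf k U"
  proof -
    have "L2_set (\<lambda>i. norm (uv i)) {..<k} = sqrt (\<Sum>i<k. \<Sum>s\<in>UNIV. (U s i)^2)"
      unfolding L2_set_def vec_sum_sq uv_def by simp
    also have "\<dots> = sqrt (\<Sum>s\<in>UNIV. \<Sum>i<k. (U s i)^2)"
      by (rule arg_cong[where f=sqrt], rule sum.swap)
    also have "\<dots> \<le> sqrt (\<Sum>s\<in>(UNIV::'s set). (two_inf k U)^2)"
    proof (rule real_sqrt_le_mono, rule sum_mono)
      fix s
      have "sqrt (\<Sum>i<k. (U s i)^2) \<le> two_inf k U" by (rule two_inf_ge)
      hence "(sqrt (\<Sum>i<k. (U s i)^2))^2 \<le> (two_inf k U)^2"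
        by (intro power_mono) (auto intro: sum_nonneg)
      thus "(\<Sum>i<k. (U s i)^2) \<le> (two_inf k U)^2" by (simp add: sum_nonneg)
    qed
    also have "\<dots> = sqrt (real CARD('s)) * two_inf k U"
      using two_inf_nonneg[of k U] by (simp add: real_sqrt_mult)
    finally show ?thesis .
  qed
  have LV: "L2_set (\<lambda>i. norm (vv i)) {..<k} \<le> sqrt (real CARD('a)) * two_inf k V"
  proof -
    have "L2_set (\<lambda>i. norm (vv i)) {..<k} = sqrt (\<Sum>i<k. \<Sum>a\<in>UNIV. (V a i)^2)"
      unfolding L2_set_def vec_sum_sq vv_def by simp
    also have "\<dots> = sqrt (\<Sum>a\<in>UNIV. \<Sum>i<k. (V a i)^2)"
      by (rule arg_cong[where f=sqrt], rule sum.swap)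
    also have "\<dots> \<le> sqrt (\<Sum>a\<in>(UNIV::'a set). (two_inf k V)^2)"
    proof (rule real_sqrt_le_mono, rule sum_mono)
      fix a
      have "sqrt (\<Sum>i<k. (V a i)^2) \<le> two_inf k V" by (rule two_inf_ge)
      hence "(sqrt (\<Sum>i<k. (V a i)^2))^2 \<le> (two_inf k V)^2"
        by (intro power_mono) (auto intro: sum_nonneg)
      thus "(\<Sum>i<k. (V a i)^2) \<le> (two_inf k V)^2" by (simp add: sum_nonneg)
    qed
    also have "\<dots> = sqrt (real CARD('a)) * two_inf k V"
      using two_inf_nonneg[of k V] by (simp add: real_sqrt_mult)
    finally show ?thesis .
  qed
  have "on * (L2_set (\<lambda>i. norm (uv i)) {..<k} * L2_set (\<lambda>i. norm (vv i)) {..<k})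
     \<le> on * ((sqrt (real CARD('s)) * two_inf k U) * (sqrt (real CARD('a)) * two_inf k V))"
    by (intro mult_left_mono[OF _ on0] mult_mono LU LV) (auto intro: L2_set_nonneg mult_nonneg_nonneg two_inf_nonneg)
  with chain show ?thesis unfolding eq on_def by (simp add: mult_ac)
qed

lemma rank_fact:
  fixes R :: "'s::finite \<Rightarrow> 'a::finite \<Rightarrow> real"
  assumes "rank (mat_of R) \<le> q"
  shows "\<exists>u v. \<forall>s a. R s a = (\<Sum>i<q. u s i * v a i)"
proof -
  define A where "A = mat_of R"
  define Rw where "Rw = Finite_Cartesian_Product.rows A"
  obtain B where B: "B \<subseteq> Rw" "independent B" "Rw \<subseteq> span B" "card B = dim Rw"
    using basis_exists[of Rw] by blast
  have finB: "finite B" using independent_bound[OF B(2)] by simp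
  have cardB: "card B \<le> q" using assms B(4) unfolding Rw_def A_def row_rank_def by simp
  have rowin: "(\<chi> a. R s a) \<in> Rw" for s
  proof -
    have "Finite_Cartesian_Product.row s A = (\<chi> a. R s a)"
      unfolding Finite_Cartesian_Product.row_def A_def mat_of_def by simp
    thus ?thesis unfolding Rw_def Finite_Cartesian_Product.rows_def by (intro CollectI exI[of _ s]) auto
  qed
  have "\<forall>s. \<exists>c. (\<chi> a. R s a) = (\<Sum>b\<in>B. c b *\<^sub>R b)"
    using rowin B(3) unfolding real_vector.span_finite[OF finB] by blast
  then obtain c where c: "\<And>s. (\<chi> a. R s a) = (\<Sum>b\<in>B. c s b *\<^sub>R b)" by metis
  obtain h where h: "bij_betw h {0..<card B} B" using ex_bij_betw_nat_finite[OF finB] by blast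
  define u where "u = (\<lambda>s i. if i < card B then c s (h i) else 0)"
  define v where "v = (\<lambda>a i. if i < card B then h i $ a else 0)"
  have "R s a = (\<Sum>i<q. u s i * v a i)" for s a
  proof -
    have "R s a = (\<chi> a. R s a) $ a" by simp
    also have "\<dots> = (\<Sum>b\<in>B. c s b * b $ a)" unfolding c[of s] by (simp add: sum_component)
    also have "\<dots> = (\<Sum>i\<in>{0..<card B}. c s (h i) * h i $ a)"
      using sum.reindex_bij_betw[OF h, of "\<lambda>b. c s b * b $ a"] by simp
    also have "\<dots> = (\<Sum>i<card B. u s i * v a i)"
      unfolding u_def v_def atLeast0LessThan by (rule sum.cong) auto
    also have "\<dots> = (\<Sum>i<q. u s i * v a i)"
    proof -
      have "(\<Sum>i<q. u s i * v a i) = (\<Sum>i<card B. u s i * v a i) + (\<Sum>i\<in>{card B..<q}. u s i * v a i)"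
        using cardB by (metis atLeast0LessThan sum.atLeastLessThan_concat zero_le)
      moreover have "(\<Sum>i\<in>{card B..<q}. u s i * v a i) = 0" unfolding u_def by simp
      ultimately show ?thesis by simp
    qed
    finally show ?thesis .
  qed
  thus ?thesis by blast
qed


lemma opnorm_nonneg: "0 \<le> opnorm D"
  unfolding opnorm_def by (rule onorm_pos_le) simp

lemma inner_maxnorm:
  fixes D M :: "'s::finite \<Rightarrow> 'a::finite \<Rightarrow> real"
  shows "\<bar>\<Sum>s\<in>UNIV. \<Sum>a\<in>UNIV. D s a * M s a\<bar>
     \<le> opnorm D * (sqrt (real CARD('s)) * sqrt (real CARD('a))) * maxnorm M"
proof -
  define c where "c = opnorm D * (sqrt (real CARD('s)) * sqrt (real CARD('a)))"
  define L where "L = \<bar>\<Sum>s\<in>UNIV. \<Sum>a\<in>UNIV. D s a * M s a\<bar>"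
  define St where "St = {two_inf k U * two_inf k V | k U V. \<forall>s a. M s a = (\<Sum>i<k. U s i * V a i)}"
  have c0: "0 \<le> c" unfolding c_def using opnorm_nonneg[of D] by simp
  have le: "L \<le> c * x" if "x \<in> St" for x
    using that inner_fact_bound[where D=D and M=M] unfolding St_def L_def c_def by blast
  have ne: "St \<noteq> {}" unfolding St_def by (rule maxnorm_nonempty)
  show ?thesis
  proof (cases "c = 0")
    case True
    obtain x where "x \<in> St" using ne by auto
    hence "L \<le> 0" using le True by force
    thus ?thesis using True unfolding L_def c_def by simp
  next
    case False
    hence cpos: "0 < c" using c0 by simp
    have "L / c \<le> Inf St"
      by (rule cInf_greatest[OF ne]) (use le cpos in \<open>simp add: field_simps mult.commute\<close>)
    hence "L \<le> c * Inf St" using cpos by (simp add: field_simps)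
    thus ?thesis unfolding L_def c_def St_def maxnorm_def .
  qed
qed

lemma entrymax_ge: "\<bar>M s a\<bar> \<le> entrymax M"
  unfolding entrymax_def
proof (rule Max_ge)
  have "{\<bar>M s a\<bar> |s a. True} = (\<lambda>(s,a). \<bar>M s a\<bar>) ` UNIV" by auto
  thus "finite {\<bar>M s a\<bar> |s a. True}" by simp
qed auto

lemma entrymax_le: "(\<And>s a. \<bar>M s a\<bar> \<le> c) \<Longrightarrow> entrymax M \<le> c"
  unfolding entrymax_def
proof (rule Max.boundedI)
  have "{\<bar>M s a\<bar> |s a. True} = (\<lambda>(s,a). \<bar>M s a\<bar>) ` UNIV" by auto
  thus "finite {\<bar>M s a\<bar> |s a. True}" by simp
qed auto

lemma concat_fact:
  fixes m n :: nat
  assumes "\<forall>s a. M1 s a = (\<Sum>i<m. u1 s i * v1 a i)" "\<forall>s a. M2 s a = (\<Sum>i<n. u2 s i * v2 a i)"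
  shows "\<forall>s a. M1 s a + M2 s a = (\<Sum>i<m+n. (if i < m then u1 s i else u2 s (i - m)) *
                                             (if i < m then v1 a i else v2 a (i - m)))"
proof (intro allI)
  fix s a
  let ?f = "\<lambda>i. (if i < m then u1 s i else u2 s (i - m)) * (if i < m then v1 a i else v2 a (i - m))"
  have "(\<Sum>i<m+n. ?f i) = (\<Sum>i<m. ?f i) + (\<Sum>i\<in>{m..<m+n}. ?f i)"
    using sum.atLeastLessThan_concat[of 0 m "m+n" ?f] by (simp add: atLeast0LessThan)
  also have "(\<Sum>i<m. ?f i) = (\<Sum>i<m. u1 s i * v1 a i)" by simp
  also have "(\<Sum>i\<in>{m..<m+n}. ?f i) = (\<Sum>i<n. ?f (i + m))"
    using sum.shift_bounds_nat_ivl[where g="?f" and m=0 and k=m and n=n] by (simp add: atLeast0LessThan add.commute)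
  also have "\<dots> = (\<Sum>i<n. u2 s i * v2 a i)" by (rule sum.cong) auto
  finally show "M1 s a + M2 s a = (\<Sum>i<m+n. ?f i)" using assms by simp
qed

lemma occ_step:
  assumes "1 \<le> t"
  shows "occ \<mu> P \<pi> (Suc t) s' a' = (\<Sum>s\<in>UNIV. \<Sum>a\<in>UNIV. occ \<mu> P \<pi> t s a * P t s a s') * \<pi> (Suc t) s' a'"
proof -
  obtain t' where "t = Suc t'" using assms by (cases t) auto
  thus ?thesis by simp
qed

lemma occ_dist:
  fixes \<mu> :: "'s::finite \<Rightarrow> real" and \<pi> :: "nat \<Rightarrow> 's \<Rightarrow> 'a::finite \<Rightarrow> real"
  assumes mu: "\<forall>s. \<mu> s \<ge> 0" "(\<Sum>s\<in>UNIV. \<mu> s) = 1"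
    and trans: "is_transition H P" and pol: "is_policy H \<pi>"
  shows "t \<in> {1..H} \<Longrightarrow> is_dist (occ \<mu> P \<pi> t)"
proof (induction t)
  case 0 thus ?case by simp
next
  case (Suc t)
  show ?case
  proof (cases t)
    case 0
    have p1: "\<forall>s. (\<forall>a. \<pi> 1 s a \<ge> 0) \<and> (\<Sum>a\<in>UNIV. \<pi> 1 s a) = 1"
      using pol Suc.prems 0 unfolding is_policy_def by auto
    show ?thesis unfolding is_dist_def 0
      using mu p1 by (auto simp: sum_distrib_left[symmetric])
  next
    case (Suc t')
    have t1: "t \<in> {1..H}" using Suc.prems Suc by auto
    have IH: "is_dist (occ \<mu> P \<pi> t)" by (rule Suc.IH[OF t1])
    have p: "\<forall>s. (\<forall>a. \<pi> (Suc t) s a \<ge> 0) \<and> (\<Sum>a\<in>UNIV. \<pi> (Suc t) s a) = 1"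
      using pol Suc.prems unfolding is_policy_def by auto
    have tr: "\<forall>s a. (\<forall>s'. P t s a s' \<ge> 0) \<and> (\<Sum>s'\<in>UNIV. P t s a s') = 1"
      using trans t1 unfolding is_transition_def by auto
    have st: "occ \<mu> P \<pi> (Suc t) s' a' = (\<Sum>s\<in>UNIV. \<Sum>a\<in>UNIV. occ \<mu> P \<pi> t s a * P t s a s') * \<pi> (Suc t) s' a'" for s' a'
      by (rule occ_step) (use t1 in auto)
    show ?thesis unfolding is_dist_def
    proof
      show "\<forall>s a. 0 \<le> occ \<mu> P \<pi> (Suc t) s a"
        using IH p tr unfolding st is_dist_def by (auto intro!: mult_nonneg_nonneg sum_nonneg)
      have "(\<Sum>s'\<in>UNIV. \<Sum>a'\<in>UNIV. occ \<mu> P \<pi> (Suc t) s' a') =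
            (\<Sum>s'\<in>UNIV. (\<Sum>s\<in>UNIV. \<Sum>a\<in>UNIV. occ \<mu> P \<pi> t s a * P t s a s'))"
        unfolding st using p by (simp add: sum_distrib_left[symmetric])
      also have "\<dots> = (\<Sum>s\<in>UNIV. \<Sum>s'\<in>UNIV. \<Sum>a\<in>UNIV. occ \<mu> P \<pi> t s a * P t s a s')"
        by (rule sum.swap)
      also have "\<dots> = (\<Sum>s\<in>UNIV. \<Sum>a\<in>UNIV. \<Sum>s'\<in>UNIV. occ \<mu> P \<pi> t s a * P t s a s')"
        by (rule sum.cong[OF refl], rule sum.swap)
      also have "\<dots> = (\<Sum>s\<in>UNIV. \<Sum>a\<in>UNIV. occ \<mu> P \<pi> t s a)"
        using tr by (simp add: sum_distrib_left[symmetric])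
      also have "\<dots> = 1" using IH unfolding is_dist_def by simp
      finally show "(\<Sum>s'\<in>UNIV. \<Sum>a'\<in>UNIV. occ \<mu> P \<pi> (Suc t) s' a') = 1" .
    qed
  qed
qed


lemma swap4:
  "(\<Sum>s\<in>UNIV. \<Sum>a\<in>UNIV. \<Sum>s'\<in>UNIV. \<Sum>a'\<in>UNIV. g s a s' a') =
   (\<Sum>s'\<in>UNIV. \<Sum>a'\<in>UNIV. \<Sum>s\<in>UNIV. \<Sum>a\<in>UNIV. (g s a s' a' :: real))"
proof -
  have "(\<Sum>s\<in>UNIV. \<Sum>a\<in>UNIV. \<Sum>s'\<in>UNIV. \<Sum>a'\<in>UNIV. g s a s' a') =
        (\<Sum>s\<in>UNIV. \<Sum>s'\<in>UNIV. \<Sum>a\<in>UNIV. \<Sum>a'\<in>UNIV. g s a s' a')"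
    by (rule sum.cong[OF refl], rule sum.swap)
  also have "\<dots> = (\<Sum>s'\<in>UNIV. \<Sum>s\<in>UNIV. \<Sum>a\<in>UNIV. \<Sum>a'\<in>UNIV. g s a s' a')"
    by (rule sum.swap)
  also have "\<dots> = (\<Sum>s'\<in>UNIV. \<Sum>s\<in>UNIV. \<Sum>a'\<in>UNIV. \<Sum>a\<in>UNIV. g s a s' a')"
    by (rule sum.cong[OF refl], rule sum.cong[OF refl], rule sum.swap)
  also have "\<dots> = (\<Sum>s'\<in>UNIV. \<Sum>a'\<in>UNIV. \<Sum>s\<in>UNIV. \<Sum>a\<in>UNIV. g s a s' a')"
    by (rule sum.cong[OF refl], rule sum.swap)
  finally show ?thesis .
qed

lemma occ_next_inner:
  assumes "1 \<le> t"
  shows "(\<Sum>s\<in>UNIV. \<Sum>a\<in>UNIV. occ \<mu> P \<pi> t s a *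
            (\<Sum>s'\<in>UNIV. \<Sum>a'\<in>UNIV. P t s a s' * \<pi> (t+1) s' a' * Q s' a'))
       = (\<Sum>s'\<in>UNIV. \<Sum>a'\<in>UNIV. occ \<mu> P \<pi> (t+1) s' a' * (Q s' a' :: real))"
proof -
  have "(\<Sum>s\<in>UNIV. \<Sum>a\<in>UNIV. occ \<mu> P \<pi> t s a *
            (\<Sum>s'\<in>UNIV. \<Sum>a'\<in>UNIV. P t s a s' * \<pi> (t+1) s' a' * Q s' a'))
     = (\<Sum>s\<in>UNIV. \<Sum>a\<in>UNIV. \<Sum>s'\<in>UNIV. \<Sum>a'\<in>UNIV. occ \<mu> P \<pi> t s a * P t s a s' * \<pi> (t+1) s' a' * Q s' a')"
    by (simp add: sum_distrib_left mult_ac)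
  also have "\<dots> = (\<Sum>s'\<in>UNIV. \<Sum>a'\<in>UNIV. \<Sum>s\<in>UNIV. \<Sum>a\<in>UNIV. occ \<mu> P \<pi> t s a * P t s a s' * \<pi> (t+1) s' a' * Q s' a')"
    by (rule swap4)
  also have "\<dots> = (\<Sum>s'\<in>UNIV. \<Sum>a'\<in>UNIV. occ \<mu> P \<pi> (t+1) s' a' * Q s' a')"
    using occ_step[OF assms, of \<mu> P \<pi>] by (simp add: sum_distrib_right)
  finally show ?thesis .
qed

lemma Y_fact:
  fixes P :: "nat \<Rightarrow> 's::finite \<Rightarrow> 'a::finite \<Rightarrow> 's \<Rightarrow> real" and r :: "nat \<Rightarrow> 's \<Rightarrow> 'a \<Rightarrow> real"
  assumes lr: "low_rank d H P r" and t: "t \<in> {1..H}"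
  shows "\<exists>k u v. k \<le> d \<and> (\<forall>s a. r t s a + (\<Sum>s'\<in>UNIV. \<Sum>a'\<in>UNIV. P t s a s' * \<pi> (t+1) s' a' * Q s' a')
             = (\<Sum>i<k. u s i * v a i))"
proof -
  define m where "m = d div 2"
  have lrt: "rank (mat_of (r t)) \<le> m"
    "(\<exists>u w. \<forall>s' s a. P t s a s' = (\<Sum>i=1..m. u i s' s * w i a)) \<or>
     (\<exists>u w. \<forall>s' s a. P t s a s' = (\<Sum>i=1..m. u i s * w i s' a))"
    using bspec[OF lr[unfolded low_rank_def] t] unfolding m_def by simp_all
  obtain u1 v1 where f1: "\<forall>s a. r t s a = (\<Sum>i<m. u1 s i * v1 a i)" using rank_fact[OF lrt(1)] by blast
  have "\<exists>u2 v2. \<forall>s a. (\<Sum>s'\<in>UNIV. \<Sum>a'\<in>UNIV. P t s a s' * \<pi> (t+1) s' a' * Q s' a') = (\<Sum>i<m. u2 s i * v2 a i)"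
    using lrt(2)
  proof
    assume "\<exists>u w. \<forall>s' s a. P t s a s' = (\<Sum>i=1..m. u i s' s * w i a)"
    then obtain u w where uw: "\<forall>s' s a. P t s a s' = (\<Sum>i=1..m. u i s' s * w i a)" by blast
    have "(\<Sum>s'\<in>UNIV. \<Sum>a'\<in>UNIV. P t s a s' * \<pi> (t+1) s' a' * Q s' a') =
          (\<Sum>i<m. (\<Sum>s'\<in>UNIV. \<Sum>a'\<in>UNIV. u (Suc i) s' s * \<pi> (t+1) s' a' * Q s' a') * w (Suc i) a)" for s a
    proof -
      have "(\<Sum>s'\<in>UNIV. \<Sum>a'\<in>UNIV. P t s a s' * \<pi> (t+1) s' a' * Q s' a') =
            (\<Sum>s'\<in>UNIV. \<Sum>a'\<in>UNIV. \<Sum>i<m. u (Suc i) s' s * \<pi> (t+1) s' a' * Q s' a' * w (Suc i) a)"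
        by (simp add: uw sum.atLeast1_atMost_eq sum_distrib_right sum_distrib_left mult_ac)
      also have "\<dots> = (\<Sum>i<m. \<Sum>s'\<in>UNIV. \<Sum>a'\<in>UNIV. u (Suc i) s' s * \<pi> (t+1) s' a' * Q s' a' * w (Suc i) a)"
      proof -
        have "(\<Sum>s'\<in>UNIV. \<Sum>a'\<in>UNIV. \<Sum>i<m. u (Suc i) s' s * \<pi> (t+1) s' a' * Q s' a' * w (Suc i) a) =
              (\<Sum>s'\<in>UNIV. \<Sum>i<m. \<Sum>a'\<in>UNIV. u (Suc i) s' s * \<pi> (t+1) s' a' * Q s' a' * w (Suc i) a)"
          by (rule sum.cong[OF refl], rule sum.swap)
        also have "\<dots> = (\<Sum>i<m. \<Sum>s'\<in>UNIV. \<Sum>a'\<in>UNIV. u (Suc i) s' s * \<pi> (t+1) s' a' * Q s' a' * w (Suc i) a)"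
          by (rule sum.swap)
        finally show ?thesis .
      qed
      also have "\<dots> = (\<Sum>i<m. (\<Sum>s'\<in>UNIV. \<Sum>a'\<in>UNIV. u (Suc i) s' s * \<pi> (t+1) s' a' * Q s' a') * w (Suc i) a)"
        by (simp add: sum_distrib_right)
      finally show ?thesis .
    qed
    thus ?thesis
      by (intro exI[of _ "\<lambda>s i. (\<Sum>s'\<in>UNIV. \<Sum>a'\<in>UNIV. u (Suc i) s' s * \<pi> (t+1) s' a' * Q s' a')"]
                exI[of _ "\<lambda>a i. w (Suc i) a"]) simp
  next
    assume "\<exists>u w. \<forall>s' s a. P t s a s' = (\<Sum>i=1..m. u i s * w i s' a)"
    then obtain u w where uw: "\<forall>s' s a. P t s a s' = (\<Sum>i=1..m. u i s * w i s' a)" by blast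
    have "(\<Sum>s'\<in>UNIV. \<Sum>a'\<in>UNIV. P t s a s' * \<pi> (t+1) s' a' * Q s' a') =
          (\<Sum>i<m. u (Suc i) s * (\<Sum>s'\<in>UNIV. \<Sum>a'\<in>UNIV. w (Suc i) s' a * \<pi> (t+1) s' a' * Q s' a'))" for s a
    proof -
      have "(\<Sum>s'\<in>UNIV. \<Sum>a'\<in>UNIV. P t s a s' * \<pi> (t+1) s' a' * Q s' a') =
            (\<Sum>s'\<in>UNIV. \<Sum>a'\<in>UNIV. \<Sum>i<m. u (Suc i) s * (w (Suc i) s' a * \<pi> (t+1) s' a' * Q s' a'))"
        by (simp add: uw sum.atLeast1_atMost_eq sum_distrib_right sum_distrib_left mult_ac)
      also have "\<dots> = (\<Sum>i<m. \<Sum>s'\<in>UNIV. \<Sum>a'\<in>UNIV. u (Suc i) s * (w (Suc i) s' a * \<pi> (t+1) s' a' * Q s' a'))"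
      proof -
        have "(\<Sum>s'\<in>UNIV. \<Sum>a'\<in>UNIV. \<Sum>i<m. u (Suc i) s * (w (Suc i) s' a * \<pi> (t+1) s' a' * Q s' a')) =
              (\<Sum>s'\<in>UNIV. \<Sum>i<m. \<Sum>a'\<in>UNIV. u (Suc i) s * (w (Suc i) s' a * \<pi> (t+1) s' a' * Q s' a'))"
          by (rule sum.cong[OF refl], rule sum.swap)
        also have "\<dots> = (\<Sum>i<m. \<Sum>s'\<in>UNIV. \<Sum>a'\<in>UNIV. u (Suc i) s * (w (Suc i) s' a * \<pi> (t+1) s' a' * Q s' a'))"
          by (rule sum.swap)
        finally show ?thesis .
      qed
      also have "\<dots> = (\<Sum>i<m. u (Suc i) s * (\<Sum>s'\<in>UNIV. \<Sum>a'\<in>UNIV. w (Suc i) s' a * \<pi> (t+1) s' a' * Q s' a'))"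
        by (simp add: sum_distrib_left)
      finally show ?thesis .
    qed
    thus ?thesis
      by (intro exI[of _ "\<lambda>s i. u (Suc i) s"]
                exI[of _ "\<lambda>a i. (\<Sum>s'\<in>UNIV. \<Sum>a'\<in>UNIV. w (Suc i) s' a * \<pi> (t+1) s' a' * Q s' a')"]) simp
  qed
  then obtain u2 v2 where f2: "\<forall>s a. (\<Sum>s'\<in>UNIV. \<Sum>a'\<in>UNIV. P t s a s' * \<pi> (t+1) s' a' * Q s' a') = (\<Sum>i<m. u2 s i * v2 a i)"
    by blast
  have "m + m \<le> d" unfolding m_def by auto
  show ?thesis
    apply (rule exI[of _ "m + m"], rule exI[of _ "\<lambda>s i. if i < m then u1 s i else u2 s (i - m)"],
          rule exI[of _ "\<lambda>a i. if i < m then v1 a i else v2 a (i - m)"], rule conjI)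
     apply (rule \<open>m + m \<le> d\<close>)
    using concat_fact[OF f1 f2] by fast
qed



theorem theorem1:
  fixes H d :: nat
    and \<mu> :: "'s::finite \<Rightarrow> real"
    and P Phat :: "nat \<Rightarrow> 's \<Rightarrow> 'a::finite \<Rightarrow> 's \<Rightarrow> real"
    and r :: "nat \<Rightarrow> 's \<Rightarrow> 'a \<Rightarrow> real"
    and \<pi>\<theta> \<pi>\<beta> :: "nat \<Rightarrow> 's \<Rightarrow> 'a \<Rightarrow> real"
    and Qhat :: "nat \<Rightarrow> 's \<Rightarrow> 'a \<Rightarrow> real"
  assumes mu: "\<forall>s. \<mu> s \<ge> 0" "(\<Sum>s\<in>UNIV. \<mu> s) = 1"
    and trans: "is_transition H P"
    and rew: "\<forall>t\<in>{1..H}. \<forall>s a. 0 \<le> r t s a \<and> r t s a \<le> 1"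
    and pol: "is_policy H \<pi>\<theta>" "is_policy H \<pi>\<beta>"
    and lowrank: "low_rank d H P r"
    and est: "\<forall>t\<in>{1..H}. \<forall>(s,a)\<in>supp (occ \<mu> P \<pi>\<beta> t). Phat t s a = P t s a"
    and Qlast: "Qhat (H+1) = (\<lambda>s a. 0)"
    and alg: "\<forall>t\<in>{1..H}. ME_inf (occ \<mu> P \<pi>\<beta> t)
               (\<lambda>s a. r t s a + (\<Sum>s'\<in>UNIV. \<Sum>a'\<in>UNIV. Phat t s a s' * \<pi>\<theta> (t+1) s' a' * Qhat (t+1) s' a'))
               (real (H - t + 1)) (Qhat t)"
  shows "\<bar>(\<Sum>s\<in>UNIV. \<Sum>a\<in>UNIV. \<mu> s * \<pi>\<theta> 1 s a * Qhat 1 s a) - Jval H \<mu> P r \<pi>\<theta>\<bar>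
         \<le> 2 * real H * sqrt (real (d * CARD('s) * CARD('a)))
            * (\<Sum>t=1..H. Dis (occ \<mu> P \<pi>\<beta> t) (occ \<mu> P \<pi>\<theta> t))"
proof -
  define \<rho> where "\<rho> = occ \<mu> P \<pi>\<beta>"
  define q where "q = occ \<mu> P \<pi>\<theta>"
  define X where "X = (\<lambda>t s a. (\<Sum>s'\<in>UNIV. \<Sum>a'\<in>UNIV. P t s a s' * \<pi>\<theta> (t+1) s' a' * Qhat (t+1) s' a'))"
  define Y where "Y = (\<lambda>t s a. r t s a + (\<Sum>s'\<in>UNIV. \<Sum>a'\<in>UNIV. P t s a s' * \<pi>\<theta> (t+1) s' a' * Qhat (t+1) s' a'))"
  define Z where "Z = (\<lambda>t s a. r t s a + (\<Sum>s'\<in>UNIV. \<Sum>a'\<in>UNIV. Phat t s a s' * \<pi>\<theta> (t+1) s' a' * Qhat (t+1) s' a'))"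
  define ip2 where "ip2 = (\<lambda>(f::'s\<Rightarrow>'a\<Rightarrow>real) g. \<Sum>s\<in>UNIV. \<Sum>a\<in>UNIV. f s a * g s a)"
  define E where "E = (\<lambda>t s a. Qhat t s a - Y t s a)"
  define C where "C = 2 * real H * sqrt (real (d * CARD('s) * CARD('a)))"
  define SA where "SA = sqrt (real CARD('s)) * sqrt (real CARD('a))"
  have C0: "0 \<le> C" unfolding C_def by simp
  have CSA: "C = 2 * real H * sqrt (real d) * SA"
    unfolding C_def SA_def by (simp add: real_sqrt_mult mult_ac)
  have SA0: "0 \<le> SA" unfolding SA_def by simp
  have MEt: "ME_inf (\<rho> t) (Z t) (real (H - t + 1)) (Qhat t)" if "t \<in> {1..H}" for t
    using alg that unfolding \<rho>_def Z_def by blast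
  have Qb: "\<bar>Qhat t s a\<bar> \<le> real (H + 1 - t)" if "t \<in> {1..H+1}" for t s a
  proof (cases "t = H + 1")
    case True thus ?thesis using Qlast by simp
  next
    case False
    hence t: "t \<in> {1..H}" using that by auto
    have "\<bar>Qhat t s a\<bar> \<le> entrymax (Qhat t)" by (rule entrymax_ge)
    also have "\<dots> \<le> real (H - t + 1)" using MEt[OF t] unfolding ME_inf_def ME_feasible_def by blast
    finally show ?thesis using t by (simp add: Suc_diff_le)
  qed
  have Xb: "\<bar>X t s a\<bar> \<le> real (H - t)" if t: "t \<in> {1..H}" for t s a
  proof (cases "t = H")
    case True
    thus ?thesis using Qlast unfolding X_def by simp
  next
    case False
    hence t1: "t + 1 \<in> {1..H}" using t by auto
    have tr: "\<forall>s'. 0 \<le> P t s a s'" "(\<Sum>s'\<in>UNIV. P t s a s') = 1"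
      using trans t unfolding is_transition_def by auto
    have po: "\<forall>s' a'. 0 \<le> \<pi>\<theta> (t+1) s' a'" "\<forall>s'. (\<Sum>a'\<in>UNIV. \<pi>\<theta> (t+1) s' a') = 1"
      using pol(1) t1 unfolding is_policy_def by auto
    have "\<bar>X t s a\<bar> \<le> (\<Sum>s'\<in>UNIV. \<Sum>a'\<in>UNIV. \<bar>P t s a s' * \<pi>\<theta> (t+1) s' a' * Qhat (t+1) s' a'\<bar>)"
      unfolding X_def by (rule order_trans[OF sum_abs sum_mono[OF sum_abs]])
    also have "\<dots> \<le> (\<Sum>s'\<in>UNIV. \<Sum>a'\<in>UNIV. P t s a s' * \<pi>\<theta> (t+1) s' a' * real (H - t))"
    proof (intro sum_mono)
      fix s' a'
      have "t + 1 \<in> {1..H+1}" using t by auto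
      from Qb[OF this, of s' a'] have "\<bar>Qhat (t+1) s' a'\<bar> \<le> real (H + 1 - (t+1))" .
      thus "\<bar>P t s a s' * \<pi>\<theta> (t+1) s' a' * Qhat (t+1) s' a'\<bar> \<le> P t s a s' * \<pi>\<theta> (t+1) s' a' * real (H - t)"
        using tr po by (simp add: abs_mult mult_left_mono)
    qed
    also have "\<dots> = real (H - t)"
      using tr po by (simp add: sum_distrib_right[symmetric] sum_distrib_left[symmetric] mult.assoc[symmetric])
    finally show ?thesis .
  qed
  have YX: "Y t s a = r t s a + X t s a" for t s a unfolding Y_def X_def ..
  have Yb: "\<bar>Y t s a\<bar> \<le> real (H - t + 1)" if t: "t \<in> {1..H}" for t s a
  proof -
    have "0 \<le> r t s a" "r t s a \<le> 1" using rew t by auto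
    thus ?thesis using Xb[OF t, of s a] t unfolding YX by auto
  qed
  have ZY: "Z t s a = Y t s a" if t: "t \<in> {1..H}" and sa: "(s,a) \<in> supp (\<rho> t)" for t s a
  proof -
    have "Phat t s a = P t s a" using bspec[OF est t] sa unfolding \<rho>_def by auto
    thus ?thesis unfolding Z_def Y_def by simp
  qed
  have Yfeas: "ME_feasible (\<rho> t) (Z t) (real (H - t + 1)) (Y t)" if t: "t \<in> {1..H}" for t
    unfolding ME_feasible_def using ZY[OF t] entrymax_le[of "Y t", OF Yb[OF t]] by auto
  have Qeq: "Qhat t s a = Y t s a" if t: "t \<in> {1..H}" and sa: "(s,a) \<in> supp (\<rho> t)" for t s a
    using MEt[OF t] sa ZY[OF t sa] unfolding ME_inf_def ME_feasible_def by auto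
  have mnQ: "maxnorm (Qhat t) \<le> maxnorm (Y t)" if t: "t \<in> {1..H}" for t
    using MEt[OF t] Yfeas[OF t] unfolding ME_inf_def by blast
  have mnY: "maxnorm (Y t) \<le> sqrt (real d) * real H" if t: "t \<in> {1..H}" for t
  proof -
    obtain k u v where kuv: "k \<le> d" "\<forall>s a. Y t s a = (\<Sum>i<k. u s i * v a i)"
      using Y_fact[OF lowrank t, of \<pi>\<theta> "Qhat (t+1)"] unfolding Y_def by blast
    have "maxnorm (Y t) \<le> sqrt (real k) * real (H - t + 1)"
      by (rule maxnorm_lowrank[OF kuv(2)]) (use Yb[OF t] in blast)
    also have "\<dots> \<le> sqrt (real d) * real H"
      using kuv(1) t by (intro mult_mono) auto
    finally show ?thesis .
  qed
  have per_g: "\<bar>ip2 (q t) (E t)\<bar> \<le> C * opnorm (\<lambda>s a. g s a - q t s a)"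
    if t: "t \<in> {1..H}" and g: "is_dist g" "supp g \<subseteq> supp (\<rho> t)" for t g
  proof -
    define D where "D = (\<lambda>s a. g s a - q t s a)"
    have gE: "ip2 g (E t) = 0"
      unfolding ip2_def
    proof (intro sum.neutral ballI)
      fix s a
      show "g s a * E t s a = 0"
      proof (cases "g s a = 0")
        case False
        hence "(s,a) \<in> supp (\<rho> t)" using g(2) unfolding supp_def by auto
        thus ?thesis using Qeq[OF t] unfolding E_def by simp
      qed simp
    qed
    have "ip2 (q t) (E t) = ip2 g (E t) - ip2 D (Qhat t) + ip2 D (Y t)"
      unfolding ip2_def D_def E_def
      by (simp add: algebra_simps sum_subtractf sum.distrib)
    hence eq: "ip2 (q t) (E t) = ip2 D (Y t) - ip2 D (Qhat t)" using gE by simp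
    have b1: "\<bar>ip2 D (Qhat t)\<bar> \<le> opnorm D * SA * (sqrt (real d) * real H)"
    proof -
      have "\<bar>ip2 D (Qhat t)\<bar> \<le> opnorm D * SA * maxnorm (Qhat t)"
        unfolding ip2_def SA_def by (rule inner_maxnorm)
      also have "\<dots> \<le> opnorm D * SA * (sqrt (real d) * real H)"
        using mnQ[OF t] mnY[OF t] opnorm_nonneg[of D] SA0 by (intro mult_left_mono) auto
      finally show ?thesis .
    qed
    have b2: "\<bar>ip2 D (Y t)\<bar> \<le> opnorm D * SA * (sqrt (real d) * real H)"
    proof -
      have "\<bar>ip2 D (Y t)\<bar> \<le> opnorm D * SA * maxnorm (Y t)"
        unfolding ip2_def SA_def by (rule inner_maxnorm)
      also have "\<dots> \<le> opnorm D * SA * (sqrt (real d) * real H)"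
        using mnY[OF t] opnorm_nonneg[of D] SA0 by (intro mult_left_mono) auto
      finally show ?thesis .
    qed
    have "\<bar>ip2 (q t) (E t)\<bar> \<le> \<bar>ip2 D (Y t)\<bar> + \<bar>ip2 D (Qhat t)\<bar>" unfolding eq by linarith
    also have "\<dots> \<le> C * opnorm D" using b1 b2 unfolding CSA by (simp add: algebra_simps)
    finally show ?thesis unfolding D_def .
  qed
  have perDis: "\<bar>ip2 (q t) (E t)\<bar> \<le> C * Dis (\<rho> t) (q t)" if t: "t \<in> {1..H}" for t
  proof -
    define St where "St = {opnorm (\<lambda>s a. g s a - q t s a) | g. is_dist g \<and> supp g \<subseteq> supp (\<rho> t)}"
    have rd: "is_dist (\<rho> t)" unfolding \<rho>_def by (rule occ_dist[OF mu trans pol(2) t])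
    have ne: "opnorm (\<lambda>s a. \<rho> t s a - q t s a) \<in> St" unfolding St_def using rd by blast
    have le: "\<bar>ip2 (q t) (E t)\<bar> \<le> C * x" if "x \<in> St" for x
      using that per_g[OF t] unfolding St_def by blast
    show ?thesis
    proof (cases "C = 0")
      case True
      thus ?thesis using le[OF ne] by simp
    next
      case False
      hence Cpos: "0 < C" using C0 by simp
      have "\<bar>ip2 (q t) (E t)\<bar> / C \<le> Inf St"
        by (rule cInf_greatest) (use ne le Cpos in \<open>auto simp: field_simps mult.commute\<close>)
      hence "\<bar>ip2 (q t) (E t)\<bar> \<le> C * Inf St" using Cpos by (simp add: field_simps)
      thus ?thesis unfolding Dis_def St_def .
    qed
  qed
  define G where "G = (\<lambda>t. ip2 (q t) (Qhat t))"
  have stepE: "ip2 (q t) (E t) = G t - ip2 (q t) (r t) - G (Suc t)" if t: "t \<in> {1..H}" for t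
  proof -
    have "ip2 (q t) (X t) = G (t + 1)"
      unfolding ip2_def X_def G_def q_def by (rule occ_next_inner) (use t in auto)
    moreover have "ip2 (q t) (E t) = G t - ip2 (q t) (r t) - ip2 (q t) (X t)"
      unfolding ip2_def E_def G_def YX by (simp add: algebra_simps sum_subtractf sum.distrib)
    ultimately show ?thesis by simp
  qed
  have tele: "(\<Sum>s\<in>UNIV. \<Sum>a\<in>UNIV. \<mu> s * \<pi>\<theta> 1 s a * Qhat 1 s a) - Jval H \<mu> P r \<pi>\<theta> = (\<Sum>t=1..H. ip2 (q t) (E t))"
  proof -
    have "(\<Sum>t=1..H. ip2 (q t) (E t)) = (\<Sum>t=1..H. (G t - G (Suc t)) - ip2 (q t) (r t))"
      by (rule sum.cong[OF refl]) (simp add: stepE)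
    also have "\<dots> = (\<Sum>t=1..H. G t - G (Suc t)) - (\<Sum>t=1..H. ip2 (q t) (r t))"
      by (rule sum_subtractf)
    also have "(\<Sum>t=1..H. G t - G (Suc t)) = - (\<Sum>t=1..H. G (Suc t) - G t)"
      by (simp add: sum_negf[symmetric])
    also have "(\<Sum>t=1..H. G (Suc t) - G t) = G (Suc H) - G 1" by (rule sum_Suc_diff) simp
    also have "G (Suc H) = 0" using Qlast unfolding G_def ip2_def by simp
    also have "G 1 = (\<Sum>s\<in>UNIV. \<Sum>a\<in>UNIV. \<mu> s * \<pi>\<theta> 1 s a * Qhat 1 s a)"
      unfolding G_def ip2_def q_def by simp
    also have "(\<Sum>t=1..H. ip2 (q t) (r t)) = Jval H \<mu> P r \<pi>\<theta>"
      unfolding Jval_def ip2_def q_def ..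
    finally show ?thesis by simp
  qed
  have "\<bar>(\<Sum>s\<in>UNIV. \<Sum>a\<in>UNIV. \<mu> s * \<pi>\<theta> 1 s a * Qhat 1 s a) - Jval H \<mu> P r \<pi>\<theta>\<bar>
        \<le> (\<Sum>t=1..H. \<bar>ip2 (q t) (E t)\<bar>)" unfolding tele by (rule sum_abs)
  also have "\<dots> \<le> (\<Sum>t=1..H. C * Dis (\<rho> t) (q t))" by (rule sum_mono) (rule perDis, simp)
  also have "\<dots> = C * (\<Sum>t=1..H. Dis (occ \<mu> P \<pi>\<beta> t) (occ \<mu> P \<pi>\<theta> t))"
    unfolding \<rho>_def q_def by (simp add: sum_distrib_left)
  finally show ?thesis unfolding C_def .
qed


end
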